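(* Let $K\subset\Gamma_r\cup\partial\Gamma_1$ be compact. Then $\rho_0$ is bounded on $K$ for every choice of switching rates $\lambda_0,\lambda_1>0$.
   Context: Fix $\alpha>\beta>0$ and $\lambda_0,\lambda_1>0$. For $i\in\{0,1\}$ let $u_i(x_1,x_2)=(-\alpha(x_1-i),-\beta(x_2-i))$, with flow $\Phi_i^t(x_1,x_2)=(i+(x_1-i)e^{-\alpha t},\, i+(x_2-i)e^{-\beta t})$. Let $(I_t)$ be a continuous-time Markov chain on $\{0,1\}$ jumping $0\to1$ at rate $\lambda_0$ and $1\to0$ at rate $\lambda_1$, and $X_t$ solve $\frac{d}{dt}X_t=u_{I_t}(X_t)$. The process $(X_t,I_t)$ has a unique invariant probability measure $\mu$, absolutely continuous w.r.t. Lebesgue times counting measure; $\rho_0$ is the Lebesgue density of $\mu(\cdot\times\{0\})$. Let $\Gamma=\{(x_1,x_2): 0\le x_2\le1,\ x_2^{\alpha/\beta}\le x_1\le 1-(1-x_2)^{\alpha/\beta}\}$, $\Gamma^\circ$ its interior, $\Gamma_r=\{x\in\Gamma^\circ:x_1>x_2\}$, and $\partial\Gamma_1=\{\Phi_1^t(0,0):t>0\}$. "$\rho_0$ is bounded on $K$" means some representative of $\rho_0$ is bounded on $K$. *)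

theory Defs
  imports "HOL-Analysis.Analysis" "HOL-Probability.Probability"
begin

text \<open>Flow of the vector field u_i(x1,x2) = (-alpha (x1 - i), -beta (x2 - i)), i in {0,1}.\<close>
definition pdmp_flow :: "real \<Rightarrow> real \<Rightarrow> nat \<Rightarrow> real \<Rightarrow> real \<times> real \<Rightarrow> real \<times> real" where
  "pdmp_flow \<alpha> \<beta> i t x =
     (real i + (fst x - real i) * exp (- \<alpha> * t), real i + (snd x - real i) * exp (- \<beta> * t))"

definition pdmp_rate :: "real \<Rightarrow> real \<Rightarrow> nat \<Rightarrow> real" where
  "pdmp_rate l0 l1 j = (if j = 0 then l0 else l1)"

definition pdmp_mode :: "nat \<Rightarrow> nat \<Rightarrow> nat" where
  "pdmp_mode i k = (i + k) mod 2"

text \<open>k-th holding time, obtained from the k-th Exp(1) sample of \<omega>: Exp(1)/rate ~ Exp(rate).\<close>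
definition pdmp_hold :: "real \<Rightarrow> real \<Rightarrow> nat \<Rightarrow> real stream \<Rightarrow> nat \<Rightarrow> real" where
  "pdmp_hold l0 l1 i \<omega> k = snth \<omega> k / pdmp_rate l0 l1 (pdmp_mode i k)"

definition pdmp_jump_time :: "real \<Rightarrow> real \<Rightarrow> nat \<Rightarrow> real stream \<Rightarrow> nat \<Rightarrow> real" where
  "pdmp_jump_time l0 l1 i \<omega> k = (\<Sum>j<k. pdmp_hold l0 l1 i \<omega> j)"

fun pdmp_pos :: "real \<Rightarrow> real \<Rightarrow> real \<Rightarrow> real \<Rightarrow> real \<times> real \<Rightarrow> nat \<Rightarrow> real stream \<Rightarrow> nat \<Rightarrow> real \<times> real" where
  "pdmp_pos \<alpha> \<beta> l0 l1 x i \<omega> 0 = x"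
| "pdmp_pos \<alpha> \<beta> l0 l1 x i \<omega> (Suc k) =
     pdmp_flow \<alpha> \<beta> (pdmp_mode i k) (pdmp_hold l0 l1 i \<omega> k) (pdmp_pos \<alpha> \<beta> l0 l1 x i \<omega> k)"

text \<open>State (X_t, I_t) at time t of the process started at (x,i), driven by the
  Exp(1) samples \<omega>.  (Off the null event where jump times do not go to infinity.)\<close>
definition pdmp_state :: "real \<Rightarrow> real \<Rightarrow> real \<Rightarrow> real \<Rightarrow> real \<Rightarrow> (real \<times> real) \<times> nat \<Rightarrow> real stream \<Rightarrow> (real \<times> real) \<times> nat" where
  "pdmp_state \<alpha> \<beta> l0 l1 t z \<omega> =
     (let x = fst z; i = snd z;
          k = (LEAST k. t < pdmp_jump_time l0 l1 i \<omega> (Suc k))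
      in (pdmp_flow \<alpha> \<beta> (pdmp_mode i k) (t - pdmp_jump_time l0 l1 i \<omega> k) (pdmp_pos \<alpha> \<beta> l0 l1 x i \<omega> k),
          pdmp_mode i k))"

definition exp_samples :: "real stream measure" where
  "exp_samples = stream_space (density lborel (\<lambda>x. ennreal (exponential_density 1 x)))"

definition pdmp_kernel :: "real \<Rightarrow> real \<Rightarrow> real \<Rightarrow> real \<Rightarrow> real \<Rightarrow> (real \<times> real) \<times> nat \<Rightarrow> ((real \<times> real) \<times> nat) set \<Rightarrow> ennreal" where
  "pdmp_kernel \<alpha> \<beta> l0 l1 t z A =
     emeasure exp_samples {\<omega> \<in> space exp_samples. pdmp_state \<alpha> \<beta> l0 l1 t z \<omega> \<in> A}"

definition pdmp_invariant :: "real \<Rightarrow> real \<Rightarrow> real \<Rightarrow> real \<Rightarrow> ((real \<times> real) \<times> nat) measure \<Rightarrow> bool" where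
  "pdmp_invariant \<alpha> \<beta> l0 l1 \<mu> \<longleftrightarrow>
     prob_space \<mu> \<and> sets \<mu> = sets (borel \<Otimes>\<^sub>M count_space {0, 1}) \<and>
     (\<forall>t\<ge>0. \<forall>A\<in>sets \<mu>. emeasure \<mu> A = (\<integral>\<^sup>+ z. pdmp_kernel \<alpha> \<beta> l0 l1 t z A \<partial>\<mu>))"

definition is_density0 :: "((real \<times> real) \<times> nat) measure \<Rightarrow> (real \<times> real \<Rightarrow> real) \<Rightarrow> bool" where
  "is_density0 \<mu> \<rho> \<longleftrightarrow> \<rho> \<in> borel_measurable lborel \<and> (\<forall>x. 0 \<le> \<rho> x) \<and>
     (\<forall>A\<in>sets lborel. emeasure \<mu> (A \<times> {0}) = (\<integral>\<^sup>+ x\<in>A. ennreal (\<rho> x) \<partial>lborel))"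

definition Gamma :: "real \<Rightarrow> real \<Rightarrow> (real \<times> real) set" where
  "Gamma \<alpha> \<beta> = {(x1, x2). 0 \<le> x2 \<and> x2 \<le> 1 \<and> x2 powr (\<alpha> / \<beta>) \<le> x1 \<and>
                            x1 \<le> 1 - (1 - x2) powr (\<alpha> / \<beta>)}"

definition Gamma_r :: "real \<Rightarrow> real \<Rightarrow> (real \<times> real) set" where
  "Gamma_r \<alpha> \<beta> = {x \<in> interior (Gamma \<alpha> \<beta>). fst x > snd x}"

definition boundary_Gamma1 :: "real \<Rightarrow> real \<Rightarrow> (real \<times> real) set" where
  "boundary_Gamma1 \<alpha> \<beta> = {pdmp_flow \<alpha> \<beta> 1 t (0, 0) | t. t > 0}"

end

theory Submission
  imports Defs
begin

lemma ln_div_le_iff: "0 < (X::real) \<Longrightarrow> 0 < k \<Longrightarrow> ln X / k \<le> a \<longleftrightarrow> X \<le> exp (k*a)"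
proof -
  assume X: "0 < X" and k: "0 < k"
  have "ln X / k \<le> a \<longleftrightarrow> ln X \<le> k*a" using k by (subst pos_divide_le_eq[OF k]) (simp add: mult.commute)
  also have "\<dots> \<longleftrightarrow> exp (ln X) \<le> exp (k*a)" by simp
  also have "\<dots> \<longleftrightarrow> X \<le> exp (k*a)" using X by simp
  finally show ?thesis .
qed
lemma le_ln_div_iff: "0 < (X::real) \<Longrightarrow> 0 < k \<Longrightarrow> a \<le> ln X / k \<longleftrightarrow> exp (k*a) \<le> X"
proof -
  assume X: "0 < X" and k: "0 < k"
  have "a \<le> ln X / k \<longleftrightarrow> k*a \<le> ln X" using k by (subst pos_le_divide_eq[OF k]) (simp add: mult.commute)
  also have "\<dots> \<longleftrightarrow> exp (k*a) \<le> exp (ln X)" by simp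
  also have "\<dots> \<longleftrightarrow> exp (k*a) \<le> X" using X by simp
  finally show ?thesis .
qed
lemma vimage_Pair_borel: assumes "(B::(real\<times>real) set) \<in> sets borel" shows "Pair c -` B \<in> sets borel"
proof -
  have "(\<lambda>y::real. (c,y)) \<in> borel_measurable borel" by measurable
  from measurable_sets[OF this assms] show ?thesis by (simp add: vimage_def)
qed
lemma vimage_Pair_borel2: assumes "(B::(real\<times>real) set) \<in> sets borel" shows "(\<lambda>x. (x,c)) -` B \<in> sets borel"
proof -
  have "(\<lambda>y::real. (y,c)) \<in> borel_measurable borel" by measurable
  from measurable_sets[OF this assms] show ?thesis by (simp add: vimage_def)
qed

lemma exp_subst_bound:
  fixes c \<delta> :: real and B1 :: "real set"
  assumes c: "c > 0" and d: "0 < \<delta>" "\<delta> \<le> 1" and B1m[measurable]: "B1 \<in> sets borel" and B1: "B1 \<subseteq> {\<delta>..1}"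
  shows "(\<integral>\<^sup>+u. indicator B1 (exp (c*u)) \<partial>lborel) \<le> ennreal (1/(c*\<delta>)) * emeasure lborel B1"
proof -
  define L where "L = ln \<delta> / c"
  have L0: "L \<le> 0" using d c by (simp add: L_def divide_nonpos_pos)
  have pw: "ennreal (indicator B1 (exp (c*u)) :: real) \<le>
      ennreal (1/(c*\<delta>)) * ennreal (indicator B1 (exp (c*u)) * (c * exp (c*u)) * indicator {L..0} u)" for u
  proof (cases "exp (c*u) \<in> B1")
    case True
    then have e: "\<delta> \<le> exp (c*u)" "exp (c*u) \<le> 1" using B1 by auto
    have u0: "u \<le> 0" using e(2) c by (simp add: mult_le_0_iff)
    have "ln \<delta> \<le> c*u" using e(1) d by (metis ln_exp ln_mono exp_gt_zero)
    then have uL: "L \<le> u" using c by (simp add: L_def divide_le_eq mult.commute)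
    have "1 \<le> 1/(c*\<delta>) * (c * exp (c*u))" using e(1) c d by (simp add: field_simps)
    then have "ennreal (indicator B1 (exp (c*u)) :: real) \<le>
      ennreal (1/(c*\<delta>) * (indicator B1 (exp (c*u)) * (c * exp (c*u)) * indicator {L..0} u))"
      using True u0 uL by (intro ennreal_leI) (simp add: indicator_def)
    also have "\<dots> = ennreal (1/(c*\<delta>)) * ennreal (indicator B1 (exp (c*u)) * (c * exp (c*u)) * indicator {L..0} u)"
      using c d by (intro ennreal_mult) auto
    finally show ?thesis .
  next
    case False
    then show ?thesis by simp
  qed
  have "(\<integral>\<^sup>+u. indicator B1 (exp (c*u)) \<partial>lborel) \<le>
      (\<integral>\<^sup>+u. ennreal (1/(c*\<delta>)) * ennreal (indicator B1 (exp (c*u)) * (c * exp (c*u)) * indicator {L..0} u) \<partial>lborel)"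
    by (rule nn_integral_mono) (metis pw ennreal_indicator)
  also have "\<dots> = ennreal (1/(c*\<delta>)) * (\<integral>\<^sup>+u. ennreal (indicator B1 (exp (c*u)) * (c * exp (c*u)) * indicator {L..0} u) \<partial>lborel)"
    by (intro nn_integral_cmult) measurable
  also have "(\<integral>\<^sup>+u. ennreal (indicator B1 (exp (c*u)) * (c * exp (c*u)) * indicator {L..0} u) \<partial>lborel)
      = (\<integral>\<^sup>+y. ennreal (indicator B1 y * indicator {exp (c*L)..exp (c*0)} y) \<partial>lborel)"
  proof (rule nn_integral_substitution[symmetric, where g = "\<lambda>u. exp (c*u)" and g' = "\<lambda>u. c * exp (c*u)"])
    show "set_borel_measurable borel {exp (c * L)..exp (c * 0)} (indicator B1 :: real \<Rightarrow> real)"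
      unfolding set_borel_measurable_def by measurable
    show "((\<lambda>u. exp (c * u)) has_real_derivative c * exp (c * x)) (at x)" for x
      by (auto intro!: derivative_eq_intros)
    show "continuous_on {L..0} (\<lambda>u. c * exp (c * u))" by (intro continuous_intros)
    show "0 \<le> c * exp (c * x)" for x using c by simp
    show "L \<le> 0" by (rule L0)
  qed
  also have "\<dots> \<le> (\<integral>\<^sup>+y. indicator B1 y \<partial>lborel)"
    by (intro nn_integral_mono) (auto simp: indicator_def)
  also have "\<dots> = emeasure lborel B1" by simp
  finally show ?thesis by (simp add: mult_left_mono)
qed

lemma flow01:
  "pdmp_flow \<alpha> \<beta> 0 b (pdmp_flow \<alpha> \<beta> 1 a x) =
    ((1 + (fst x - 1) * exp (- \<alpha> * a)) * exp (- \<alpha> * b), (1 + (snd x - 1) * exp (- \<beta> * a)) * exp (- \<beta> * b))"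
  by (simp add: pdmp_flow_def)

lemma coord_ident:
  fixes v1 v2 \<alpha> \<beta> b :: real
  assumes "v1 > 0" "v2 > 0" "\<alpha> > 0" "\<beta> > 0"
  shows "(v1 * exp (- \<alpha> * b), v2 * exp (- \<beta> * b)) =
     (exp (\<alpha> * (ln v1 / \<alpha> + (-1) * b)), exp (\<beta> * ((ln v2 / \<beta> - ln v1 / \<alpha>) + (ln v1 / \<alpha> + (-1) * b))))"
proof -
  have "exp (\<alpha> * (ln v1 / \<alpha> + (-1) * b)) = exp (ln v1 + (- \<alpha> * b))"
    using assms by (simp add: field_simps)
  also have "\<dots> = v1 * exp (- \<alpha> * b)" using assms by (simp add: exp_diff exp_minus field_simps)
  finally have 1: "exp (\<alpha> * (ln v1 / \<alpha> + (-1) * b)) = v1 * exp (- \<alpha> * b)" .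
  have "exp (\<beta> * ((ln v2 / \<beta> - ln v1 / \<alpha>) + (ln v1 / \<alpha> + (-1) * b))) = exp (ln v2 + (- \<beta> * b))"
    using assms by (simp add: field_simps)
  also have "\<dots> = v2 * exp (- \<beta> * b)" using assms by (simp add: exp_diff exp_minus field_simps)
  finally show ?thesis using 1 by simp
qed

lemma analytic:
  fixes \<alpha> \<beta> \<delta> :: real and B :: "(real \<times> real) set" and x :: "real \<times> real"
  assumes ab: "0 < \<beta>" "\<beta> < \<alpha>" and d: "0 < \<delta>" "\<delta> < 1"
    and Bm[measurable]: "B \<in> sets borel"
    and BK: "B \<subseteq> {y. \<delta> \<le> snd y \<and> snd y + \<delta> \<le> fst y \<and> fst y \<le> 1}"
    and x1: "fst x \<le> 1"
  shows "(\<integral>\<^sup>+a. indicator {0..} a * (\<integral>\<^sup>+b. indicator {0..} b *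
            indicator B (pdmp_flow \<alpha> \<beta> 0 b (pdmp_flow \<alpha> \<beta> 1 a x)) \<partial>lborel) \<partial>lborel)
     \<le> ennreal (1/\<delta>) * (ennreal (1/(\<beta>*\<delta>)) * (ennreal (1/(\<alpha>*\<delta>)) * emeasure lborel B))"
proof -
  define c1 where "c1 = 1 - fst x"
  define c2 where "c2 = 1 - snd x"
  define v1 where "v1 a = 1 - c1 * exp (- \<alpha> * a)" for a
  define v2 where "v2 a = 1 - c2 * exp (- \<beta> * a)" for a
  have F: "pdmp_flow \<alpha> \<beta> 0 b (pdmp_flow \<alpha> \<beta> 1 a x) = (v1 a * exp (-\<alpha>*b), v2 a * exp (-\<beta>*b))" for a b
    unfolding flow01 by (simp add: v1_def v2_def c1_def c2_def algebra_simps)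
  define E where "E \<theta> \<sigma> = (indicator B (exp (\<alpha>*\<sigma>), exp (\<beta>*(\<theta>+\<sigma>))) :: real)" for \<theta> \<sigma>
  define \<phi> where "\<phi> a = ln (v2 a)/\<beta> - ln (v1 a)/\<alpha>" for a
  define d\<phi> where "d\<phi> a = 1 / v2 a - 1 / v1 a" for a
  define rel where "rel a \<longleftrightarrow> a \<ge> 0 \<and> (\<exists>b\<ge>0. (v1 a * exp (-\<alpha>*b), v2 a * exp (-\<beta>*b)) \<in> B)" for a
  have c1: "c1 \<ge> 0" using x1 by (simp add: c1_def)
  have relD: "v2 a \<ge> \<delta> \<and> v1 a - v2 a \<ge> \<delta> \<and> v1 a \<le> 1" if ra: "rel a" for a
  proof -
    obtain b where b: "b \<ge> 0" "(v1 a * exp (-\<alpha>*b), v2 a * exp (-\<beta>*b)) \<in> B"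
      using ra rel_def by auto
    define y1 where "y1 = v1 a * exp (-\<alpha>*b)"
    define y2 where "y2 = v2 a * exp (-\<beta>*b)"
    have y: "\<delta> \<le> y2" "y2 + \<delta> \<le> y1" using b BK by (auto simp: y1_def y2_def)
    have v1eq: "v1 a = y1 * exp (\<alpha>*b)" by (simp add: y1_def exp_minus field_simps)
    have v2eq: "v2 a = y2 * exp (\<beta>*b)" by (simp add: y2_def exp_minus field_simps)
    have e1: "exp (\<beta>*b) \<le> exp (\<alpha>*b)" using ab b by (simp add: mult_right_mono)
    have e0: "1 \<le> exp (\<beta>*b)" using ab b by simp
    have "y2 \<le> y2 * exp (\<beta>*b)" using e0 y d by (simp add: mult_le_cancel_left1)
    then have A: "v2 a \<ge> \<delta>" using v2eq y by linarith
    have "y1 * exp (\<beta>*b) \<le> y1 * exp (\<alpha>*b)" using e1 y d by (intro mult_left_mono) auto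
    then have "v1 a - v2 a \<ge> (y1 - y2) * exp (\<beta>*b)" using v1eq v2eq by (simp add: algebra_simps)
    moreover have "(y1 - y2) * exp (\<beta>*b) \<ge> \<delta> * 1" using y e0 d by (intro mult_mono) auto
    ultimately have B': "v1 a - v2 a \<ge> \<delta>" by simp
    have "v1 a \<le> 1" using c1 by (simp add: v1_def)
    with A B' show ?thesis by simp
  qed
  show ?thesis
  proof (cases "\<exists>a. rel a")
    case False
    have "indicator {0..} a * (\<integral>\<^sup>+b. indicator {0..} b *
            indicator B (pdmp_flow \<alpha> \<beta> 0 b (pdmp_flow \<alpha> \<beta> 1 a x)) \<partial>lborel) = 0" for a
    proof (cases "a \<ge> 0")
      case True
      then have "indicator {0..} b * indicator B (pdmp_flow \<alpha> \<beta> 0 b (pdmp_flow \<alpha> \<beta> 1 a x)) = (0::ennreal)" for b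
        using False unfolding F by (auto simp: rel_def indicator_def)
      then have "(\<integral>\<^sup>+b. indicator {0..} b *
            indicator B (pdmp_flow \<alpha> \<beta> 0 b (pdmp_flow \<alpha> \<beta> 1 a x)) \<partial>lborel) = (\<integral>\<^sup>+b. 0 \<partial>(lborel::real measure))"
        by (intro nn_integral_cong) simp
      then show ?thesis by simp
    qed simp
    then have "(\<integral>\<^sup>+a. indicator {0..} a * (\<integral>\<^sup>+b. indicator {0..} b *
            indicator B (pdmp_flow \<alpha> \<beta> 0 b (pdmp_flow \<alpha> \<beta> 1 a x)) \<partial>lborel) \<partial>lborel)
        = (\<integral>\<^sup>+a. 0 \<partial>(lborel::real measure))"
      by (intro nn_integral_cong) simp
    then show ?thesis by simp
  next
    case True
    then obtain a0 where a0: "rel a0" by blast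
    have c2pos: "c2 > 0"
    proof -
      have "1 - v2 a0 \<ge> \<delta>" using relD[OF a0] by linarith
      then have "c2 * exp (- \<beta> * a0) \<ge> \<delta>" by (simp add: v2_def)
      then have "c2 * exp (- \<beta> * a0) > 0" using d by linarith
      then show ?thesis by (simp add: zero_less_mult_iff)
    qed
    define p where "p = max 0 (max (ln (c2/(1-\<delta>))/\<beta>) (ln ((c1+\<delta>)/c2)/(\<alpha>-\<beta>)))"
    define q where "q = ln (c2/\<delta>)/\<beta>"
    have eb: "exp (- \<beta> * a) * exp (\<beta> * a) = 1" for a by (simp add: exp_minus)
    have ea: "exp (- \<alpha> * a) * exp (\<alpha> * a) = 1" for a by (simp add: exp_minus)
    have eab: "exp (- \<beta> * a) = exp ((\<alpha>-\<beta>) * a) * exp (- \<alpha> * a)" for a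
      by (simp add: mult_exp_exp algebra_simps)
    have relpq: "p \<le> a \<and> a \<le> q" if ra: "rel a" for a
    proof -
      have a: "a \<ge> 0" using ra rel_def by auto
      have i: "c2 * exp (- \<beta> * a) \<le> 1 - \<delta>" using relD[OF ra] by (simp add: v2_def)
      have ii: "c2 * exp (- \<beta> * a) - c1 * exp (- \<alpha> * a) \<ge> \<delta>" using relD[OF ra] by (simp add: v2_def v1_def)
      have iii: "c2 * exp (- \<beta> * a) \<ge> \<delta>" using ii c1 by (smt (verit) exp_gt_zero mult_nonneg_nonneg)
      have "c2 * exp (- \<beta> * a) * exp (\<beta> * a) \<le> (1 - \<delta>) * exp (\<beta> * a)"
        using i by (intro mult_right_mono) auto
      moreover have "c2 * exp (- \<beta> * a) * exp (\<beta> * a) = c2" using eb[of a] by (metis mult.assoc mult.right_neutral)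
      ultimately have "c2 \<le> (1 - \<delta>) * exp (\<beta> * a)" by linarith
      then have "c2/(1-\<delta>) \<le> exp (\<beta> * a)" using d by (simp add: divide_le_eq mult.commute)
      then have P1: "ln (c2/(1-\<delta>))/\<beta> \<le> a" using ln_div_le_iff[of "c2/(1-\<delta>)" \<beta> a] c2pos d ab by simp
      have "(c2 * exp (- \<beta> * a) - c1 * exp (- \<alpha> * a)) * exp (\<alpha> * a) \<ge> \<delta> * exp (\<alpha> * a)"
        using ii by (intro mult_right_mono) auto
      moreover have "\<delta> * exp (\<alpha> * a) \<ge> \<delta> * 1" using d a ab by (intro mult_left_mono) auto
      moreover have "(c2 * exp (- \<beta> * a) - c1 * exp (- \<alpha> * a)) * exp (\<alpha> * a) = c2 * exp ((\<alpha>-\<beta>)*a) - c1"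
      proof -
        have e1: "exp (- \<beta> * a) * exp (\<alpha> * a) = exp ((\<alpha>-\<beta>)*a)" by (simp add: mult_exp_exp algebra_simps)
        show ?thesis by (simp only: left_diff_distrib mult.assoc e1 ea mult_1_right)
      qed
      ultimately have "c1 + \<delta> \<le> c2 * exp ((\<alpha>-\<beta>)*a)" by linarith
      then have "(c1+\<delta>)/c2 \<le> exp ((\<alpha>-\<beta>)*a)" using c2pos by (simp add: divide_le_eq mult.commute)
      then have P2: "ln ((c1+\<delta>)/c2)/(\<alpha>-\<beta>) \<le> a" using ln_div_le_iff[of "(c1+\<delta>)/c2" "\<alpha>-\<beta>" a] c2pos d ab c1 by simp
      have "\<delta> * exp (\<beta> * a) \<le> c2 * exp (- \<beta> * a) * exp (\<beta> * a)"
        using iii by (intro mult_right_mono) auto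
      moreover have "c2 * exp (- \<beta> * a) * exp (\<beta> * a) = c2" using eb[of a] by (metis mult.assoc mult.right_neutral)
      ultimately have "\<delta> * exp (\<beta> * a) \<le> c2" by linarith
      then have "exp (\<beta> * a) \<le> c2/\<delta>" using d by (simp add: le_divide_eq mult.commute)
      then have Q: "a \<le> q" unfolding q_def using le_ln_div_iff[of "c2/\<delta>" \<beta> a] c2pos d ab by simp
      show ?thesis using P1 P2 Q a by (simp add: p_def)
    qed
    have pqgood: "v2 a \<ge> \<delta> \<and> v1 a > v2 a" if "p \<le> a" for a
    proof -
      have P1: "ln (c2/(1-\<delta>))/\<beta> \<le> a" and P2: "ln ((c1+\<delta>)/c2)/(\<alpha>-\<beta>) \<le> a" and a: "0 \<le> a"
        using that by (auto simp: p_def)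
      have "c2/(1-\<delta>) \<le> exp (\<beta> * a)" using P1 ln_div_le_iff[of "c2/(1-\<delta>)" \<beta> a] c2pos d ab by simp
      then have "c2 \<le> (1-\<delta>) * exp (\<beta> * a)" using d by (simp add: divide_le_eq mult.commute)
      then have "c2 * exp (- \<beta> * a) \<le> (1-\<delta>) * exp (\<beta> * a) * exp (- \<beta> * a)"
        by (intro mult_right_mono) auto
      moreover have "(1-\<delta>) * exp (\<beta> * a) * exp (- \<beta> * a) = 1-\<delta>" using eb[of a] by (metis mult.assoc mult.commute mult.right_neutral)
      ultimately have "c2 * exp (- \<beta> * a) \<le> 1-\<delta>" by linarith
      then have A: "v2 a \<ge> \<delta>" by (simp add: v2_def)
      have "(c1+\<delta>)/c2 \<le> exp ((\<alpha>-\<beta>)*a)" using P2 ln_div_le_iff[of "(c1+\<delta>)/c2" "\<alpha>-\<beta>" a] c2pos d ab c1 by simp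
      then have "c1 + \<delta> \<le> c2 * exp ((\<alpha>-\<beta>)*a)" using c2pos by (simp add: divide_le_eq mult.commute)
      then have "(c1 + \<delta>) * exp (- \<alpha> * a) \<le> c2 * exp ((\<alpha>-\<beta>)*a) * exp (- \<alpha> * a)"
        by (intro mult_right_mono) auto
      moreover have "c2 * exp ((\<alpha>-\<beta>)*a) * exp (- \<alpha> * a) = c2 * exp (- \<beta> * a)"
        by (simp only: eab mult.assoc)
      ultimately have "c1 * exp (- \<alpha> * a) + \<delta> * exp (- \<alpha> * a) \<le> c2 * exp (- \<beta> * a)"
        by (simp only: distrib_right)
      moreover have "\<delta> * exp (- \<alpha> * a) > 0" using d by simp
      ultimately have "v1 a > v2 a" by (simp add: v1_def v2_def)
      with A show ?thesis by simp
    qed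
    have pq: "p \<le> q" using relpq[OF a0] by simp
    have pos: "v1 a > 0 \<and> v2 a > 0" if "p \<le> a" for a using pqgood[OF that] d by auto
    have dphi_ge: "d\<phi> a \<ge> \<delta>" if ra: "rel a" for a
    proof -
      have r: "v2 a \<ge> \<delta>" "v1 a - v2 a \<ge> \<delta>" "v1 a \<le> 1" using relD[OF ra] by auto
      have "v1 a * v2 a \<le> 1 * 1" using r d by (intro mult_mono) auto
      moreover have "v1 a * v2 a > 0" using r d by simp
      ultimately have "(v1 a - v2 a) / (v1 a * v2 a) \<ge> (v1 a - v2 a) / 1"
        using r d by (intro divide_left_mono) auto
      moreover have "d\<phi> a = (v1 a - v2 a) / (v1 a * v2 a)" using r d
        by (simp add: d\<phi>_def field_simps)
      ultimately show ?thesis using r by simp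
    qed
    define G where "G a \<sigma> = ennreal (1/\<delta>) * ennreal (E (\<phi> a) \<sigma> * d\<phi> a * indicator {p..q} a)" for a \<sigma>
    have Gm[measurable]: "case_prod G \<in> borel_measurable (lborel \<Otimes>\<^sub>M lborel)"
      unfolding G_def E_def \<phi>_def d\<phi>_def v1_def v2_def by measurable
    have pw: "indicator {0..} a * (\<integral>\<^sup>+b. indicator {0..} b *
            indicator B (pdmp_flow \<alpha> \<beta> 0 b (pdmp_flow \<alpha> \<beta> 1 a x)) \<partial>lborel)
        \<le> (\<integral>\<^sup>+\<sigma>. G a \<sigma> \<partial>lborel)" for a
    proof (cases "rel a")
      case True
      have a: "a \<ge> 0" using True rel_def by auto
      have apq: "p \<le> a" "a \<le> q" using relpq[OF True] by auto
      have vp: "v1 a > 0" "v2 a > 0" using pos[OF apq(1)] by auto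
      have "indicator {0..} a * (\<integral>\<^sup>+b. indicator {0..} b *
            indicator B (pdmp_flow \<alpha> \<beta> 0 b (pdmp_flow \<alpha> \<beta> 1 a x)) \<partial>lborel)
          = (\<integral>\<^sup>+b. indicator {0..} b * indicator B (pdmp_flow \<alpha> \<beta> 0 b (pdmp_flow \<alpha> \<beta> 1 a x)) \<partial>lborel)"
        using a by simp
      also have "\<dots> \<le> (\<integral>\<^sup>+b. ennreal (E (\<phi> a) (ln (v1 a)/\<alpha> + (-1) * b)) \<partial>lborel)"
      proof (rule nn_integral_mono)
        fix b :: real
        have "indicator B (pdmp_flow \<alpha> \<beta> 0 b (pdmp_flow \<alpha> \<beta> 1 a x)) = (indicator B (v1 a * exp (-\<alpha>*b), v2 a * exp (-\<beta>*b)) :: ennreal)"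
          unfolding F ..
        also have "\<dots> = ennreal (E (\<phi> a) (ln (v1 a)/\<alpha> + (-1) * b))"
          unfolding E_def \<phi>_def using coord_ident[OF vp(1) vp(2), of \<alpha> \<beta> b] ab by (simp add: ennreal_indicator)
        finally show "indicator {0..} b * indicator B (pdmp_flow \<alpha> \<beta> 0 b (pdmp_flow \<alpha> \<beta> 1 a x))
             \<le> ennreal (E (\<phi> a) (ln (v1 a)/\<alpha> + (-1) * b))"
          by (simp add: indicator_def)
      qed
      also have "\<dots> = (\<integral>\<^sup>+\<sigma>. ennreal (E (\<phi> a) \<sigma>) \<partial>lborel)"
        by (subst nn_integral_real_affine[where c = "-1" and t = "ln (v1 a)/\<alpha>"]) (auto simp: E_def)
      also have "\<dots> \<le> (\<integral>\<^sup>+\<sigma>. G a \<sigma> \<partial>lborel)"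
      proof (rule nn_integral_mono)
        fix \<sigma>
        have E01: "E (\<phi> a) \<sigma> \<ge> 0" by (simp add: E_def)
        have "E (\<phi> a) \<sigma> \<le> 1/\<delta> * (E (\<phi> a) \<sigma> * d\<phi> a * indicator {p..q} a)"
        proof -
          have "1 \<le> 1/\<delta> * d\<phi> a" using dphi_ge[OF True] d by (simp add: field_simps)
          then have "E (\<phi> a) \<sigma> * 1 \<le> E (\<phi> a) \<sigma> * (1/\<delta> * d\<phi> a)" using E01 by (intro mult_left_mono) auto
          then show ?thesis using apq by (simp add: algebra_simps)
        qed
        then have "ennreal (E (\<phi> a) \<sigma>) \<le> ennreal (1/\<delta> * (E (\<phi> a) \<sigma> * d\<phi> a * indicator {p..q} a))"
          by (rule ennreal_leI)
        also have "\<dots> = G a \<sigma>" unfolding G_def using d dphi_ge[OF True] E01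
          by (intro ennreal_mult) auto
        finally show "ennreal (E (\<phi> a) \<sigma>) \<le> G a \<sigma>" .
      qed
      finally show ?thesis .
    next
      case False
      have "indicator {0..} a * (\<integral>\<^sup>+b. indicator {0..} b *
            indicator B (pdmp_flow \<alpha> \<beta> 0 b (pdmp_flow \<alpha> \<beta> 1 a x)) \<partial>lborel) = 0"
      proof (cases "a \<ge> 0")
        case True
        then have "indicator {0..} b * indicator B (pdmp_flow \<alpha> \<beta> 0 b (pdmp_flow \<alpha> \<beta> 1 a x)) = (0::ennreal)" for b
          using False unfolding F by (auto simp: rel_def indicator_def)
        then have "(\<integral>\<^sup>+b. indicator {0..} b *
              indicator B (pdmp_flow \<alpha> \<beta> 0 b (pdmp_flow \<alpha> \<beta> 1 a x)) \<partial>lborel) = (\<integral>\<^sup>+b. 0 \<partial>(lborel::real measure))"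
          by (intro nn_integral_cong) simp
        then show ?thesis by simp
      qed simp
      then show ?thesis by (metis zero_le)
    qed
    have v1f: "v1 = (\<lambda>a. 1 - c1 * exp (- \<alpha> * a))" by (simp add: fun_eq_iff v1_def)
    have v2f: "v2 = (\<lambda>a. 1 - c2 * exp (- \<beta> * a))" by (simp add: fun_eq_iff v2_def)
    have dv1: "(v1 has_real_derivative \<alpha> * (1 - v1 a)) (at a)" for a
      unfolding v1f by (auto intro!: derivative_eq_intros simp: algebra_simps)
    have dv2: "(v2 has_real_derivative \<beta> * (1 - v2 a)) (at a)" for a
      unfolding v2f by (auto intro!: derivative_eq_intros simp: algebra_simps)
    have dphi: "(\<phi> has_real_derivative d\<phi> a) (at a)" if "p \<le> a" for a
    proof -
      have vp: "v1 a > 0" "v2 a > 0" using pos[OF that] by auto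
      have "((\<lambda>a. ln (v2 a)/\<beta> - ln (v1 a)/\<alpha>) has_real_derivative
          (1 / v2 a * (\<beta> * (1 - v2 a))) / \<beta> - (1 / v1 a * (\<alpha> * (1 - v1 a))) / \<alpha>) (at a)"
        by (intro DERIV_diff DERIV_cdivide DERIV_ln_divide[THEN DERIV_chain2] dv1 dv2 vp)
      moreover have "(1 / v2 a * (\<beta> * (1 - v2 a))) / \<beta> - (1 / v1 a * (\<alpha> * (1 - v1 a))) / \<alpha> = d\<phi> a"
        using vp ab by (simp add: d\<phi>_def field_simps)
      moreover have "\<phi> = (\<lambda>a. ln (v2 a)/\<beta> - ln (v1 a)/\<alpha>)" by (simp add: fun_eq_iff \<phi>_def)
      ultimately show ?thesis by simp
    qed
    have dphi_cont: "continuous_on {p..q} d\<phi>"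
    proof -
      have "continuous_on {p..q} (\<lambda>a. 1 / v2 a - 1 / v1 a)"
      proof -
        have cv1: "continuous_on {p..q} v1" unfolding v1f by (intro continuous_intros)
        have cv2: "continuous_on {p..q} v2" unfolding v2f by (intro continuous_intros)
        show ?thesis using cv1 cv2 pos by (intro continuous_intros) (auto, metis less_irrefl, metis less_irrefl)
      qed
      moreover have "d\<phi> = (\<lambda>a. 1 / v2 a - 1 / v1 a)" by (simp add: fun_eq_iff d\<phi>_def)
      ultimately show ?thesis by simp
    qed
    have dphi_nn: "d\<phi> a \<ge> 0" if "a \<in> {p..q}" for a
    proof -
      have "v1 a > v2 a" "v2 a > 0" using pqgood[of a] pos[of a] that by auto
      then show ?thesis by (simp add: d\<phi>_def field_simps)
    qed
    have pq: "p \<le> q" using relpq[OF a0] by simp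
    have per_sigma: "(\<integral>\<^sup>+a. G a \<sigma> \<partial>lborel) \<le>
        ennreal (1/\<delta>) * (ennreal (1/(\<beta>*\<delta>)) * (\<integral>\<^sup>+y. indicator B (exp (\<alpha>*\<sigma>), y) \<partial>lborel))" for \<sigma>
    proof -
      have "(\<integral>\<^sup>+a. G a \<sigma> \<partial>lborel) = ennreal (1/\<delta>) * (\<integral>\<^sup>+a. ennreal (E (\<phi> a) \<sigma> * d\<phi> a * indicator {p..q} a) \<partial>lborel)"
        unfolding G_def by (intro nn_integral_cmult) (unfold E_def \<phi>_def d\<phi>_def v1_def v2_def, measurable)
      also have "(\<integral>\<^sup>+a. ennreal (E (\<phi> a) \<sigma> * d\<phi> a * indicator {p..q} a) \<partial>lborel)
          = (\<integral>\<^sup>+\<theta>. ennreal (E \<theta> \<sigma> * indicator {\<phi> p..\<phi> q} \<theta>) \<partial>lborel)"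
      proof (rule nn_integral_substitution[symmetric, where g = \<phi> and g' = d\<phi>])
        show "set_borel_measurable borel {\<phi> p..\<phi> q} (\<lambda>\<theta>. E \<theta> \<sigma>)"
          unfolding set_borel_measurable_def E_def by measurable
        show "(\<phi> has_real_derivative d\<phi> x) (at x)" if "x \<in> {p..q}" for x using dphi that by auto
        show "continuous_on {p..q} d\<phi>" by (rule dphi_cont)
        show "0 \<le> d\<phi> x" if "x \<in> {p..q}" for x using dphi_nn that by auto
        show "p \<le> q" by (rule pq)
      qed
      also have "\<dots> \<le> (\<integral>\<^sup>+\<theta>. ennreal (E \<theta> \<sigma>) \<partial>lborel)"
        by (intro nn_integral_mono ennreal_leI) (auto simp: E_def indicator_def)
      also have "\<dots> = (\<integral>\<^sup>+\<rho>. indicator (Pair (exp (\<alpha>*\<sigma>)) -` B) (exp (\<beta>*\<rho>)) \<partial>lborel)"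
      proof -
        have "(\<integral>\<^sup>+\<rho>. indicator (Pair (exp (\<alpha>*\<sigma>)) -` B) (exp (\<beta>*\<rho>)) \<partial>lborel) =
            ennreal \<bar>1\<bar> * (\<integral>\<^sup>+\<theta>. indicator (Pair (exp (\<alpha>*\<sigma>)) -` B) (exp (\<beta>*(\<sigma> + 1 * \<theta>))) \<partial>lborel)"
          using vimage_Pair_borel[OF Bm, of "exp (\<alpha>*\<sigma>)"] by (intro nn_integral_real_affine) auto
        also have "\<dots> = (\<integral>\<^sup>+\<theta>. ennreal (E \<theta> \<sigma>) \<partial>lborel)"
          by (simp only: abs_one ennreal_1 mult_1 mult_1_left, intro nn_integral_cong) (simp add: E_def add.commute split: split_indicator)
        finally show ?thesis by simp
      qed
      also have "\<dots> \<le> ennreal (1/(\<beta>*\<delta>)) * emeasure lborel (Pair (exp (\<alpha>*\<sigma>)) -` B)"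
      proof (rule exp_subst_bound)
        show "Pair (exp (\<alpha> * \<sigma>)) -` B \<in> sets borel" by (rule vimage_Pair_borel[OF Bm])
        show "Pair (exp (\<alpha> * \<sigma>)) -` B \<subseteq> {\<delta>..1}"
        proof
          fix y assume "y \<in> Pair (exp (\<alpha> * \<sigma>)) -` B"
          then have "(exp (\<alpha> * \<sigma>), y) \<in> B" by simp
          then have "\<delta> \<le> y \<and> y + \<delta> \<le> exp (\<alpha> * \<sigma>) \<and> exp (\<alpha> * \<sigma>) \<le> 1" using BK by force
          then have "\<delta> \<le> y" "y \<le> 1" using d by linarith+
          then show "y \<in> {\<delta>..1}" by simp
        qed
      qed (use ab d in auto)
      also have "emeasure lborel (Pair (exp (\<alpha>*\<sigma>)) -` B) = (\<integral>\<^sup>+y. indicator B (exp (\<alpha>*\<sigma>), y) \<partial>lborel)"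
      proof -
        have "emeasure lborel (Pair (exp (\<alpha>*\<sigma>)) -` B) = (\<integral>\<^sup>+y. indicator (Pair (exp (\<alpha>*\<sigma>)) -` B) y \<partial>lborel)"
          by (rule nn_integral_indicator[symmetric]) (simp add: vimage_Pair_borel[OF Bm])
        also have "\<dots> = (\<integral>\<^sup>+y. indicator B (exp (\<alpha>*\<sigma>), y) \<partial>lborel)"
          by (intro nn_integral_cong) (simp split: split_indicator)
        finally show ?thesis .
      qed
      finally show ?thesis by (simp add: mult_left_mono)
    qed
    have "(\<integral>\<^sup>+a. indicator {0..} a * (\<integral>\<^sup>+b. indicator {0..} b *
            indicator B (pdmp_flow \<alpha> \<beta> 0 b (pdmp_flow \<alpha> \<beta> 1 a x)) \<partial>lborel) \<partial>lborel)
        \<le> (\<integral>\<^sup>+a. (\<integral>\<^sup>+\<sigma>. G a \<sigma> \<partial>lborel) \<partial>lborel)"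
      by (intro nn_integral_mono pw)
    also have "\<dots> = (\<integral>\<^sup>+\<sigma>. (\<integral>\<^sup>+a. G a \<sigma> \<partial>lborel) \<partial>lborel)"
      by (rule lborel_pair.Fubini'[OF Gm, symmetric])
    also have "\<dots> \<le> (\<integral>\<^sup>+\<sigma>. ennreal (1/\<delta>) * (ennreal (1/(\<beta>*\<delta>)) * (\<integral>\<^sup>+y. indicator B (exp (\<alpha>*\<sigma>), y) \<partial>lborel)) \<partial>lborel)"
      by (intro nn_integral_mono per_sigma)
    also have "\<dots> = ennreal (1/\<delta>) * (ennreal (1/(\<beta>*\<delta>)) * (\<integral>\<^sup>+\<sigma>. (\<integral>\<^sup>+y. indicator B (exp (\<alpha>*\<sigma>), y) \<partial>lborel) \<partial>lborel))"
      by (simp add: nn_integral_cmult)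
    also have "(\<integral>\<^sup>+\<sigma>. (\<integral>\<^sup>+y. indicator B (exp (\<alpha>*\<sigma>), y) \<partial>lborel) \<partial>lborel)
        = (\<integral>\<^sup>+y. (\<integral>\<^sup>+\<sigma>. indicator B (exp (\<alpha>*\<sigma>), y) \<partial>lborel) \<partial>lborel)"
      by (rule lborel_pair.Fubini'[symmetric]) measurable
    also have "\<dots> \<le> (\<integral>\<^sup>+y. ennreal (1/(\<alpha>*\<delta>)) * emeasure lborel ((\<lambda>x. (x,y)) -` B) \<partial>lborel)"
    proof (rule nn_integral_mono)
      fix y
      have "(\<integral>\<^sup>+\<sigma>. indicator B (exp (\<alpha>*\<sigma>), y) \<partial>lborel) = (\<integral>\<^sup>+\<sigma>. indicator ((\<lambda>x. (x,y)) -` B) (exp (\<alpha>*\<sigma>)) \<partial>lborel)"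
        by (intro nn_integral_cong) (simp split: split_indicator)
      also have "\<dots> \<le> ennreal (1/(\<alpha>*\<delta>)) * emeasure lborel ((\<lambda>x. (x,y)) -` B)"
      proof (rule exp_subst_bound)
        show "(\<lambda>x. (x,y)) -` B \<in> sets borel" by (rule vimage_Pair_borel2[OF Bm])
        show "(\<lambda>x. (x,y)) -` B \<subseteq> {\<delta>..1}"
        proof
          fix z assume "z \<in> (\<lambda>x. (x,y)) -` B"
          then have "(z, y) \<in> B" by simp
          then have "\<delta> \<le> y \<and> y + \<delta> \<le> z \<and> z \<le> 1" using BK by force
          then have "\<delta> \<le> z" "z \<le> 1" using d by linarith+
          then show "z \<in> {\<delta>..1}" by simp
        qed
      qed (use ab d in auto)
      finally show "(\<integral>\<^sup>+\<sigma>. indicator B (exp (\<alpha>*\<sigma>), y) \<partial>lborel) \<le> ennreal (1/(\<alpha>*\<delta>)) * emeasure lborel ((\<lambda>x. (x,y)) -` B)" .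
    qed
    also have "\<dots> = ennreal (1/(\<alpha>*\<delta>)) * (\<integral>\<^sup>+y. (\<integral>\<^sup>+x. indicator B (x,y) \<partial>lborel) \<partial>lborel)"
    proof -
      have "emeasure lborel ((\<lambda>x. (x,y)) -` B) = (\<integral>\<^sup>+x. indicator B (x,y) \<partial>lborel)" for y
      proof -
        have "emeasure lborel ((\<lambda>x. (x,y)) -` B) = (\<integral>\<^sup>+x. indicator ((\<lambda>x. (x,y)) -` B) x \<partial>lborel)"
          by (rule nn_integral_indicator[symmetric]) (simp add: vimage_Pair_borel2[OF Bm])
        also have "\<dots> = (\<integral>\<^sup>+x. indicator B (x,y) \<partial>lborel)"
          by (intro nn_integral_cong) (simp split: split_indicator)
        finally show ?thesis .
      qed
      then show ?thesis by (simp add: nn_integral_cmult)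
    qed
    also have "(\<integral>\<^sup>+y. (\<integral>\<^sup>+x. indicator B (x,y) \<partial>lborel) \<partial>lborel) = emeasure lborel B"
    proof -
      have "emeasure lborel B = emeasure (lborel \<Otimes>\<^sub>M lborel) B" by (simp add: lborel_prod)
      also have "\<dots> = (\<integral>\<^sup>+x. (\<integral>\<^sup>+y. indicator B (x,y) \<partial>lborel) \<partial>lborel)"
        by (rule lborel.emeasure_pair_measure) (simp only: lborel_prod sets_lborel Bm)
      also have "\<dots> = (\<integral>\<^sup>+y. (\<integral>\<^sup>+x. indicator B (x,y) \<partial>lborel) \<partial>lborel)"
        by (rule lborel_pair.Fubini'[symmetric]) measurable
      finally show ?thesis by simp
    qed
    finally show ?thesis by (simp add: mult_left_mono mult.assoc)
  qed
qed

definition expM :: "real measure" where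
  "expM = density lborel (\<lambda>x. ennreal (exponential_density 1 x))"

lemma exp_samples_eq: "exp_samples = stream_space expM"
  by (simp add: exp_samples_def expM_def)

lemma prob_expM: "prob_space expM"
  unfolding expM_def by (rule prob_space_exponential_density) simp

interpretation EM: prob_space expM by (rule prob_expM)

lemma prob_S: "prob_space exp_samples"
  unfolding exp_samples_eq by (rule EM.prob_space_stream_space)

interpretation ES: prob_space exp_samples by (rule prob_S)

lemma sets_expM[simp, measurable_cong]: "sets expM = sets borel"
  by (simp add: expM_def)

lemma space_expM[simp]: "space expM = UNIV"
  by (simp add: expM_def)

lemma AE_expM_nonneg: "AE w in expM. 0 \<le> w"
  unfolding expM_def by (subst AE_density) (auto simp: exponential_density_def)

lemma AE_S_nonneg: "AE \<omega> in exp_samples. \<forall>n. 0 \<le> \<omega> !! n"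
proof -
  have "AE \<omega> in stream_space expM. stream_all (\<lambda>w. 0 \<le> w) \<omega>"
    by (rule EM.AE_stream_all) (auto simp: AE_expM_nonneg)
  then show ?thesis unfolding exp_samples_eq stream_all_def
    by (rule eventually_mono) (use snth_sset in blast)
qed

lemma nn_integral_S:
  assumes [measurable]: "f \<in> borel_measurable exp_samples"
  shows "(\<integral>\<^sup>+\<omega>. f \<omega> \<partial>exp_samples) = (\<integral>\<^sup>+w. (\<integral>\<^sup>+\<omega>. f (w ## \<omega>) \<partial>exp_samples) \<partial>expM)"
  unfolding exp_samples_eq by (rule EM.nn_integral_stream_space) (simp add: exp_samples_eq[symmetric])

lemma nn_integral_expM:
  assumes "f \<in> borel_measurable borel"
  shows "(\<integral>\<^sup>+w. f w \<partial>expM) = (\<integral>\<^sup>+w. ennreal (exponential_density 1 w) * f w \<partial>lborel)"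
  unfolding expM_def using assms by (subst nn_integral_density) auto

lemma mode_Suc: "pdmp_mode i (Suc k) = pdmp_mode (Suc i) k"
  by (simp add: pdmp_mode_def)

lemma hold_Suc: "pdmp_hold l0 l1 i (w ## \<omega>) (Suc k) = pdmp_hold l0 l1 (Suc i) \<omega> k"
  by (simp add: pdmp_hold_def mode_Suc)

lemma hold_0: "pdmp_hold l0 l1 i (w ## \<omega>) 0 = w / pdmp_rate l0 l1 (i mod 2)"
  by (simp add: pdmp_hold_def pdmp_mode_def)

lemma jt_Suc: "pdmp_jump_time l0 l1 i (w ## \<omega>) (Suc k) =
    w / pdmp_rate l0 l1 (i mod 2) + pdmp_jump_time l0 l1 (Suc i) \<omega> k"
  unfolding pdmp_jump_time_def by (simp only: sum.lessThan_Suc_shift hold_Suc hold_0)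

lemma jt_0[simp]: "pdmp_jump_time l0 l1 i \<omega> 0 = 0"
  by (simp add: pdmp_jump_time_def)

lemma pos_Suc: "pdmp_pos \<alpha> \<beta> l0 l1 x i (w ## \<omega>) (Suc k) =
    pdmp_pos \<alpha> \<beta> l0 l1 (pdmp_flow \<alpha> \<beta> (i mod 2) (w / pdmp_rate l0 l1 (i mod 2)) x) (Suc i) \<omega> k"
proof (induction k)
  case 0
  then show ?case by (simp add: hold_0 pdmp_mode_def)
next
  case (Suc k)
  then show ?case by (simp only: pdmp_pos.simps mode_Suc hold_Suc)
qed

lemma meas_fst[measurable (raw)]:
  "y \<in> borel_measurable N \<Longrightarrow> (\<lambda>u. fst (y u :: real \<times> real)) \<in> borel_measurable N"
proof -
  assume y: "y \<in> borel_measurable N"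
  have "(fst :: real \<times> real \<Rightarrow> real) \<in> borel_measurable borel"
    by (rule borel_measurable_continuous_onI) (intro continuous_intros)
  from measurable_comp[OF y this] show ?thesis by (simp add: comp_def)
qed

lemma meas_snd[measurable (raw)]:
  "y \<in> borel_measurable N \<Longrightarrow> (\<lambda>u. snd (y u :: real \<times> real)) \<in> borel_measurable N"
proof -
  assume y: "y \<in> borel_measurable N"
  have "(snd :: real \<times> real \<Rightarrow> real) \<in> borel_measurable borel"
    by (rule borel_measurable_continuous_onI) (intro continuous_intros)
  from measurable_comp[OF y this] show ?thesis by (simp add: comp_def)
qed

lemma measurable_flow[measurable (raw)]:
  assumes [measurable]: "h \<in> borel_measurable N" "y \<in> borel_measurable N"
  shows "(\<lambda>u. pdmp_flow \<alpha> \<beta> j (h u) (y u)) \<in> borel_measurable N"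
  unfolding pdmp_flow_def using assms by (intro borel_measurable_Pair) measurable

lemma snth_meas_S: "(\<lambda>\<omega>. \<omega> !! k) \<in> borel_measurable exp_samples"
proof -
  have "(\<lambda>\<omega>. \<omega> !! k) \<in> measurable (stream_space expM) expM" by (rule measurable_snth)
  then show ?thesis unfolding exp_samples_eq by (simp add: measurable_cong_sets[OF refl sets_expM])
qed

lemma measurable_hold[measurable (raw)]:
  assumes "\<omega> \<in> measurable N exp_samples"
  shows "(\<lambda>u. pdmp_hold l0 l1 i (\<omega> u) k) \<in> borel_measurable N"
proof -
  have "(\<lambda>u. (\<omega> u) !! k) \<in> borel_measurable N"
    using measurable_comp[OF assms snth_meas_S] by (simp add: comp_def)
  then show ?thesis unfolding pdmp_hold_def by (intro borel_measurable_divide) auto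
qed

lemma measurable_jt[measurable (raw)]:
  assumes "\<omega> \<in> measurable N exp_samples"
  shows "(\<lambda>u. pdmp_jump_time l0 l1 i (\<omega> u) k) \<in> borel_measurable N"
  unfolding pdmp_jump_time_def by (intro borel_measurable_sum measurable_hold[OF assms])

lemma measurable_pos[measurable (raw)]:
  assumes "\<omega> \<in> measurable N exp_samples" "x \<in> borel_measurable N"
  shows "(\<lambda>u. pdmp_pos \<alpha> \<beta> l0 l1 (x u) i (\<omega> u) k) \<in> borel_measurable N"
proof (induction k)
  case 0
  then show ?case using assms(2) by simp
next
  case (Suc k)
  show ?case by (simp only: pdmp_pos.simps) (rule measurable_flow[OF measurable_hold[OF assms(1)] Suc])
qed

definition tm :: "real \<Rightarrow> real \<Rightarrow> real \<Rightarrow> real \<Rightarrow> (real\<times>real) set \<Rightarrow> nat \<Rightarrow> real \<Rightarrow> real\<times>real \<Rightarrow> nat \<Rightarrow> real stream \<Rightarrow> ennreal" where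
  "tm \<alpha> \<beta> l0 l1 B n t x i \<omega> = (if pdmp_jump_time l0 l1 i \<omega> n \<le> t \<and> pdmp_mode i n = 0 \<and>
      pdmp_flow \<alpha> \<beta> 0 (t - pdmp_jump_time l0 l1 i \<omega> n) (pdmp_pos \<alpha> \<beta> l0 l1 x i \<omega> n) \<in> B then 1 else 0)"

lemma measurable_tm[measurable (raw)]:
  assumes [measurable]: "B \<in> sets borel" and "t \<in> borel_measurable N" "x \<in> borel_measurable N"
    "\<omega> \<in> measurable N exp_samples"
  shows "(\<lambda>u. tm \<alpha> \<beta> l0 l1 B n (t u) (x u) i (\<omega> u)) \<in> borel_measurable N"
proof -
  note [measurable] = assms(2,3) measurable_jt[OF assms(4)] measurable_pos[OF assms(4,3)]
  show ?thesis unfolding tm_def by measurable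
qed

lemma tm_Suc: "tm \<alpha> \<beta> l0 l1 B (Suc n) t x i (w ## \<omega>) =
   tm \<alpha> \<beta> l0 l1 B n (t - w / pdmp_rate l0 l1 (i mod 2))
     (pdmp_flow \<alpha> \<beta> (i mod 2) (w / pdmp_rate l0 l1 (i mod 2)) x) (Suc i) \<omega>"
  unfolding tm_def jt_Suc pos_Suc mode_Suc by (simp add: algebra_simps)

lemma int_exp_expM:
  assumes r: "r > 0"
  shows "(\<integral>\<^sup>+w. ennreal (exp (- w / r)) \<partial>expM) = ennreal (r/(r+1))"
proof -
  have "(\<integral>\<^sup>+w. ennreal (exp (- w / r)) \<partial>expM) = (\<integral>\<^sup>+w. ennreal (exponential_density 1 w) * ennreal (exp (- w / r)) \<partial>lborel)"
    by (rule nn_integral_expM) measurable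
  also have "\<dots> = (\<integral>\<^sup>+w. ennreal (r/(r+1)) * ennreal (exponential_density (1 + 1/r) w) \<partial>lborel)"
  proof (rule nn_integral_cong)
    fix w :: real
    show "ennreal (exponential_density 1 w) * ennreal (exp (- w / r)) = ennreal (r/(r+1)) * ennreal (exponential_density (1 + 1/r) w)"
    proof (cases "w < 0")
      case True then show ?thesis by (simp add: exponential_density_def)
    next
      case False
      have e: "exp (- w) * exp (- w / r) = exp (- w * (1 + 1/r))"
        by (simp add: mult_exp_exp algebra_simps)
      have "r+1 \<noteq> 0" "r \<noteq> 0" using r by auto
      have "r + r * r > 0" using r by (simp add: add_pos_pos)
      then have "r + r * r \<noteq> 0" by simp
      then have "r/(r+1) * (1 + 1/r) = 1" using \<open>r \<noteq> 0\<close> \<open>r+1 \<noteq> 0\<close> by (simp add: field_simps)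
      then have "exp (- w) * exp (- w / r) = r/(r+1) * ((1 + 1/r) * exp (- w * (1 + 1/r)))"
        unfolding e by (metis mult.assoc mult_1)
      then show ?thesis using False r
        by (simp add: exponential_density_def ennreal_mult'[symmetric] ennreal_mult[symmetric])
    qed
  qed
  also have "\<dots> = ennreal (r/(r+1)) * (\<integral>\<^sup>+w. ennreal (exponential_density (1 + 1/r) w) \<partial>lborel)"
    by (rule nn_integral_cmult) measurable
  also have "(\<integral>\<^sup>+w. ennreal (exponential_density (1 + 1/r) w) \<partial>lborel) = 1"
  proof -
    interpret P: prob_space "density lborel (exponential_density (1 + 1/r))"
      by (rule prob_space_exponential_density) (use r in \<open>simp add: add_pos_pos\<close>)
    have "emeasure (density lborel (exponential_density (1 + 1/r))) UNIV = 1"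
      using P.emeasure_space_1 by simp
    then show ?thesis by (subst (asm) emeasure_density) auto
  qed
  finally show ?thesis by simp
qed

definition rho :: "real \<Rightarrow> real \<Rightarrow> real" where
  "rho l0 l1 = max (l0/(l0+1)) (l1/(l1+1))"

lemma rho_bounds: "l0 > 0 \<Longrightarrow> l1 > 0 \<Longrightarrow> 0 < rho l0 l1 \<and> rho l0 l1 < 1"
  by (auto simp: rho_def max_def)

lemma rate_pos: "l0 > 0 \<Longrightarrow> l1 > 0 \<Longrightarrow> pdmp_rate l0 l1 j > 0"
  by (simp add: pdmp_rate_def)

lemma rate_le_rho: "l0 > 0 \<Longrightarrow> l1 > 0 \<Longrightarrow> pdmp_rate l0 l1 j / (pdmp_rate l0 l1 j + 1) \<le> rho l0 l1"
  by (auto simp: pdmp_rate_def rho_def)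

lemma Ee_bound:
  assumes l: "l0 > 0" "l1 > 0"
  shows "(\<integral>\<^sup>+\<omega>. ennreal (exp (- pdmp_jump_time l0 l1 i \<omega> n)) \<partial>exp_samples) \<le> ennreal (rho l0 l1 ^ n)"
proof (induction n arbitrary: i)
  case 0
  then show ?case by (simp add: ES.emeasure_space_1)
next
  case (Suc n)
  define r where "r = pdmp_rate l0 l1 (i mod 2)"
  have r: "r > 0" using rate_pos[OF l] by (simp add: r_def)
  have "(\<integral>\<^sup>+\<omega>. ennreal (exp (- pdmp_jump_time l0 l1 i \<omega> (Suc n))) \<partial>exp_samples)
      = (\<integral>\<^sup>+w. (\<integral>\<^sup>+\<omega>. ennreal (exp (- pdmp_jump_time l0 l1 i (w ## \<omega>) (Suc n))) \<partial>exp_samples) \<partial>expM)"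
    by (rule nn_integral_S) measurable
  also have "\<dots> = (\<integral>\<^sup>+w. ennreal (exp (- w / r)) * (\<integral>\<^sup>+\<omega>. ennreal (exp (- pdmp_jump_time l0 l1 (Suc i) \<omega> n)) \<partial>exp_samples) \<partial>expM)"
  proof (rule nn_integral_cong)
    fix w
    have "(\<integral>\<^sup>+\<omega>. ennreal (exp (- pdmp_jump_time l0 l1 i (w ## \<omega>) (Suc n))) \<partial>exp_samples)
        = (\<integral>\<^sup>+\<omega>. ennreal (exp (- w / r)) * ennreal (exp (- pdmp_jump_time l0 l1 (Suc i) \<omega> n)) \<partial>exp_samples)"
    proof (intro nn_integral_cong)
      fix \<omega>
      have "exp (- (w / r + pdmp_jump_time l0 l1 (Suc i) \<omega> n)) = exp (- w / r) * exp (- pdmp_jump_time l0 l1 (Suc i) \<omega> n)"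
        by (simp add: mult_exp_exp)
      then show "ennreal (exp (- pdmp_jump_time l0 l1 i (w ## \<omega>) (Suc n))) = ennreal (exp (- w / r)) * ennreal (exp (- pdmp_jump_time l0 l1 (Suc i) \<omega> n))"
        by (simp add: jt_Suc r_def[symmetric] ennreal_mult[symmetric])
    qed
    also have "\<dots> = ennreal (exp (- w / r)) * (\<integral>\<^sup>+\<omega>. ennreal (exp (- pdmp_jump_time l0 l1 (Suc i) \<omega> n)) \<partial>exp_samples)"
      by (rule nn_integral_cmult) measurable
    finally show "(\<integral>\<^sup>+\<omega>. ennreal (exp (- pdmp_jump_time l0 l1 i (w ## \<omega>) (Suc n))) \<partial>exp_samples) = \<dots>" .
  qed
  also have "\<dots> \<le> (\<integral>\<^sup>+w. ennreal (exp (- w / r)) * ennreal (rho l0 l1 ^ n) \<partial>expM)"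
    by (intro nn_integral_mono mult_left_mono Suc.IH) auto
  also have "\<dots> = ennreal (r/(r+1)) * ennreal (rho l0 l1 ^ n)"
  proof -
    have I: "(\<integral>\<^sup>+w. ennreal (exp (- (w / r))) \<partial>expM) = ennreal (r/(r+1))" using int_exp_expM[OF r] by simp
    show ?thesis by (subst nn_integral_multc) (measurable, simp add: I)
  qed
  also have "\<dots> \<le> ennreal (rho l0 l1) * ennreal (rho l0 l1 ^ n)"
    using rate_le_rho[OF l, of "i mod 2"] by (intro mult_right_mono ennreal_leI) (auto simp: r_def)
  also have "\<dots> = ennreal (rho l0 l1 ^ Suc n)"
    using rho_bounds[OF l] by (simp add: ennreal_mult[symmetric])
  finally show ?case .
qed

interpretation LE: pair_sigma_finite lborel expM
  by (intro pair_sigma_finite.intro lborel.sigma_finite_measure_axioms EM.sigma_finite_measure_axioms)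

lemma measurable_Stream_S[measurable (raw)]:
  assumes "f \<in> borel_measurable N" "g \<in> measurable N exp_samples"
  shows "(\<lambda>x. f x ## g x) \<in> measurable N exp_samples"
proof -
  have f: "f \<in> measurable N expM" using assms(1) by (simp add: measurable_cong_sets[OF refl sets_expM])
  show ?thesis using assms(2) unfolding exp_samples_eq by (intro measurable_Stream[OF f]) auto
qed

lemma flow_fst_le1:
  assumes "j < 2" "0 \<le> h" "0 < \<alpha>" "fst y \<le> 1"
  shows "fst (pdmp_flow \<alpha> \<beta> j h y) \<le> 1"
proof -
  have e: "exp (- \<alpha> * h) \<le> 1" "exp (- \<alpha> * h) > 0" using assms by auto
  consider "j = 0" | "j = 1" using assms by linarith
  then show ?thesis
  proof cases
    case 1
    show ?thesis
    proof (cases "fst y \<le> 0")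
      case True
      have "fst y * exp (- \<alpha> * h) \<le> 0" using True e by (simp add: mult_nonpos_nonneg)
      then show ?thesis using 1 by (simp add: pdmp_flow_def)
    next
      case False
      have "fst y * exp (- \<alpha> * h) \<le> 1 * 1" using False e assms by (intro mult_mono) auto
      then show ?thesis using 1 by (simp add: pdmp_flow_def)
    qed
  next
    case 2
    have "(fst y - 1) * exp (- \<alpha> * h) \<le> 0" using e assms by (simp add: mult_nonpos_nonneg)
    then show ?thesis using 2 by (simp add: pdmp_flow_def)
  qed
qed



lemma claim_base:
  fixes \<alpha> \<beta> \<delta> l0 l1 :: real and B :: "(real \<times> real) set"
  assumes ab: "0 < \<beta>" "\<beta> < \<alpha>" and d: "0 < \<delta>" "\<delta> < 1" and l: "0 < l0" "0 < l1"
    and Bm[measurable]: "B \<in> sets borel"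
    and BK: "B \<subseteq> {y. \<delta> \<le> snd y \<and> snd y + \<delta> \<le> fst y \<and> fst y \<le> 1}"
    and x1: "fst x \<le> 1"
  shows "(\<integral>\<^sup>+t. indicator {s..s+1} t * (\<integral>\<^sup>+\<omega>. tm \<alpha> \<beta> l0 l1 B (Suc 0) t x i \<omega> \<partial>exp_samples) \<partial>lborel)
    \<le> ennreal l1 * (ennreal (1/\<delta>) * (ennreal (1/(\<beta>*\<delta>)) * (ennreal (1/(\<alpha>*\<delta>)) * emeasure lborel B))) * ennreal (exp (s+1))"
proof -
  define Kb where "Kb = ennreal (1/\<delta>) * (ennreal (1/(\<beta>*\<delta>)) * (ennreal (1/(\<alpha>*\<delta>)) * emeasure lborel B))"
  define r where "r = pdmp_rate l0 l1 (i mod 2)"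
  have r: "r > 0" using rate_pos[OF l] by (simp add: r_def)
  define h0 where "h0 t w = (if w/r \<le> t \<and> pdmp_mode (Suc i) 0 = 0 \<and>
      pdmp_flow \<alpha> \<beta> 0 (t - w/r) (pdmp_flow \<alpha> \<beta> (i mod 2) (w/r) x) \<in> B then 1 else (0::ennreal))" for t w
  have h0m[measurable]: "case_prod h0 \<in> borel_measurable (lborel \<Otimes>\<^sub>M expM)"
    unfolding h0_def by measurable
  have inner: "(\<integral>\<^sup>+\<omega>. tm \<alpha> \<beta> l0 l1 B (Suc 0) t x i \<omega> \<partial>exp_samples) = (\<integral>\<^sup>+w. h0 t w \<partial>expM)" for t
  proof -
    have "(\<integral>\<^sup>+\<omega>. tm \<alpha> \<beta> l0 l1 B (Suc 0) t x i \<omega> \<partial>exp_samples)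
        = (\<integral>\<^sup>+w. (\<integral>\<^sup>+\<omega>. tm \<alpha> \<beta> l0 l1 B (Suc 0) t x i (w ## \<omega>) \<partial>exp_samples) \<partial>expM)"
      by (rule nn_integral_S) measurable
    also have "\<dots> = (\<integral>\<^sup>+w. (\<integral>\<^sup>+\<omega>. h0 t w \<partial>exp_samples) \<partial>expM)"
      by (intro nn_integral_cong) (simp only: tm_Suc, simp add: tm_def h0_def r_def)
    also have "\<dots> = (\<integral>\<^sup>+w. h0 t w \<partial>expM)"
      by (simp add: ES.emeasure_space_1)
    finally show ?thesis .
  qed
  show ?thesis
  proof (cases "pdmp_mode (Suc i) 0 = 0")
    case False
    then have "h0 t w = 0" for t w by (simp add: h0_def)
    then show ?thesis by (simp add: inner)
  next
    case True
    then have i1: "i mod 2 = 1" by (simp add: pdmp_mode_def) presburger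
    then have rl1: "r = l1" by (simp add: r_def pdmp_rate_def)
    show ?thesis
    proof (cases "s + 1 < 0")
      case True
      have "indicator {s..s+1} t * (\<integral>\<^sup>+w. h0 t w \<partial>expM) = 0" for t
      proof (cases "t \<in> {s..s+1}")
        case tin: True
        have "AE w in expM. h0 t w = 0"
        proof (rule eventually_mono[OF AE_expM_nonneg])
          fix w :: real assume "0 \<le> w"
          then have "w/r \<ge> 0" using r by simp
          moreover have "t < 0" using tin True by simp
          ultimately show "h0 t w = 0" by (simp add: h0_def)
        qed
        then have "(\<integral>\<^sup>+w. h0 t w \<partial>expM) = (\<integral>\<^sup>+w. 0 \<partial>expM)" by (rule nn_integral_cong_AE)
        then show ?thesis by simp
      qed simp
      then have "(\<integral>\<^sup>+t. indicator {s..s+1} t * (\<integral>\<^sup>+w. h0 t w \<partial>expM) \<partial>lborel) = (\<integral>\<^sup>+t. 0 \<partial>(lborel::real measure))"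
        by (intro nn_integral_cong) simp
      then show ?thesis by (simp add: inner)
    next
      case False
      define H where "H a = (\<integral>\<^sup>+b. indicator {0..} b * indicator B (pdmp_flow \<alpha> \<beta> 0 b (pdmp_flow \<alpha> \<beta> 1 a x)) \<partial>lborel)" for a
      have Hm[measurable]: "H \<in> borel_measurable borel" unfolding H_def by measurable
      have "(\<integral>\<^sup>+t. indicator {s..s+1} t * (\<integral>\<^sup>+\<omega>. tm \<alpha> \<beta> l0 l1 B (Suc 0) t x i \<omega> \<partial>exp_samples) \<partial>lborel)
          \<le> (\<integral>\<^sup>+t. (\<integral>\<^sup>+w. h0 t w \<partial>expM) \<partial>lborel)"
        unfolding inner by (intro nn_integral_mono) (simp add: indicator_def)
      also have "\<dots> = (\<integral>\<^sup>+w. (\<integral>\<^sup>+t. h0 t w \<partial>lborel) \<partial>expM)"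
        by (rule LE.Fubini'[OF h0m, symmetric])
      also have "\<dots> = (\<integral>\<^sup>+w. H (w/r) \<partial>expM)"
      proof (rule nn_integral_cong)
        fix w
        have "(\<integral>\<^sup>+t. h0 t w \<partial>lborel) = ennreal \<bar>1\<bar> * (\<integral>\<^sup>+b. h0 (w/r + 1 * b) w \<partial>lborel)"
          by (rule nn_integral_real_affine) (unfold h0_def, measurable)
        also have "\<dots> = H (w/r)"
          unfolding H_def using True i1
          by (simp only: abs_one ennreal_1 mult_1_left, intro nn_integral_cong) (simp add: h0_def indicator_def)
        finally show "(\<integral>\<^sup>+t. h0 t w \<partial>lborel) = H (w/r)" .
      qed
      also have "\<dots> = (\<integral>\<^sup>+w. ennreal (exponential_density 1 w) * H (w/r) \<partial>lborel)"
        by (rule nn_integral_expM) measurable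
      also have "\<dots> \<le> (\<integral>\<^sup>+w. indicator {0..} w * H (w/r) \<partial>lborel)"
        by (intro nn_integral_mono mult_right_mono) (auto simp: exponential_density_def indicator_def)
      also have "\<dots> = ennreal \<bar>r\<bar> * (\<integral>\<^sup>+a. indicator {0..} (0 + r * a) * H ((0 + r * a)/r) \<partial>lborel)"
        by (rule nn_integral_real_affine) (measurable, use r in simp)
      also have "\<dots> = ennreal r * (\<integral>\<^sup>+a. indicator {0..} a * H a \<partial>lborel)"
        using r by (intro arg_cong2[where f = "(*)"] nn_integral_cong) (auto simp: indicator_def zero_le_mult_iff)
      also have "\<dots> \<le> ennreal r * Kb"
        unfolding H_def Kb_def by (intro mult_left_mono analytic[OF ab d Bm BK x1]) auto
      also have "\<dots> \<le> ennreal r * Kb * ennreal (exp (s+1))"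
      proof -
        have "1 \<le> exp (s+1)" using False by simp
        then have "ennreal r * Kb * 1 \<le> ennreal r * Kb * ennreal (exp (s+1))"
          by (intro mult_left_mono) auto
        then show ?thesis by simp
      qed
      finally show ?thesis by (simp add: rl1 Kb_def)
    qed
  qed
qed


lemma claim:
  fixes \<alpha> \<beta> \<delta> l0 l1 :: real and B :: "(real \<times> real) set"
  assumes ab: "0 < \<beta>" "\<beta> < \<alpha>" and d: "0 < \<delta>" "\<delta> < 1" and l: "0 < l0" "0 < l1"
    and Bm[measurable]: "B \<in> sets borel"
    and BK: "B \<subseteq> {y. \<delta> \<le> snd y \<and> snd y + \<delta> \<le> fst y \<and> fst y \<le> 1}"
  shows "fst x \<le> 1 \<Longrightarrow> (\<integral>\<^sup>+t. indicator {s..s+1} t * (\<integral>\<^sup>+\<omega>. tm \<alpha> \<beta> l0 l1 B (Suc n) t x i \<omega> \<partial>exp_samples) \<partial>lborel)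
    \<le> ennreal l1 * (ennreal (1/\<delta>) * (ennreal (1/(\<beta>*\<delta>)) * (ennreal (1/(\<alpha>*\<delta>)) * emeasure lborel B)))
       * (\<integral>\<^sup>+\<omega>. ennreal (exp (s + 1 - pdmp_jump_time l0 l1 i \<omega> n)) \<partial>exp_samples)"
proof (induction n arbitrary: x i s)
  case 0
  then show ?case using claim_base[OF ab d l Bm BK, of x s i] by (simp add: ES.emeasure_space_1)
next
  case (Suc n)
  define C where "C = ennreal l1 * (ennreal (1/\<delta>) * (ennreal (1/(\<beta>*\<delta>)) * (ennreal (1/(\<alpha>*\<delta>)) * emeasure lborel B)))"
  define r where "r = pdmp_rate l0 l1 (i mod 2)"
  have r: "r > 0" using rate_pos[OF l] by (simp add: r_def)
  define x' where "x' w = pdmp_flow \<alpha> \<beta> (i mod 2) (w/r) x" for w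
  define \<Phi> where "\<Phi> \<tau> y = (\<integral>\<^sup>+\<omega>. tm \<alpha> \<beta> l0 l1 B (Suc n) \<tau> y (Suc i) \<omega> \<partial>exp_samples)" for \<tau> y
  have \<Phi>m: "(\<lambda>(t, w). indicator {s..s+1} t * \<Phi> (t - w/r) (x' w)) \<in> borel_measurable (lborel \<Otimes>\<^sub>M expM)"
    unfolding \<Phi>_def x'_def by measurable
  have \<Phi>m1: "(\<lambda>\<tau>. \<Phi> \<tau> y) \<in> borel_measurable borel" for y
    unfolding \<Phi>_def by measurable
  have inner: "(\<integral>\<^sup>+\<omega>. tm \<alpha> \<beta> l0 l1 B (Suc (Suc n)) t x i \<omega> \<partial>exp_samples) = (\<integral>\<^sup>+w. \<Phi> (t - w/r) (x' w) \<partial>expM)" for t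
  proof -
    have "(\<integral>\<^sup>+\<omega>. tm \<alpha> \<beta> l0 l1 B (Suc (Suc n)) t x i \<omega> \<partial>exp_samples)
        = (\<integral>\<^sup>+w. (\<integral>\<^sup>+\<omega>. tm \<alpha> \<beta> l0 l1 B (Suc (Suc n)) t x i (w ## \<omega>) \<partial>exp_samples) \<partial>expM)"
      by (rule nn_integral_S) measurable
    also have "\<dots> = (\<integral>\<^sup>+w. \<Phi> (t - w/r) (x' w) \<partial>expM)"
      by (intro nn_integral_cong) (simp only: tm_Suc \<Phi>_def x'_def r_def)
    finally show ?thesis .
  qed
  have "(\<integral>\<^sup>+t. indicator {s..s+1} t * (\<integral>\<^sup>+\<omega>. tm \<alpha> \<beta> l0 l1 B (Suc (Suc n)) t x i \<omega> \<partial>exp_samples) \<partial>lborel)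
      = (\<integral>\<^sup>+t. (\<integral>\<^sup>+w. indicator {s..s+1} t * \<Phi> (t - w/r) (x' w) \<partial>expM) \<partial>lborel)"
  proof (rule nn_integral_cong)
    fix t
    have m: "(\<lambda>w. \<Phi> (t - w/r) (x' w)) \<in> borel_measurable expM"
      unfolding \<Phi>_def x'_def by measurable
    show "indicator {s..s+1} t * (\<integral>\<^sup>+\<omega>. tm \<alpha> \<beta> l0 l1 B (Suc (Suc n)) t x i \<omega> \<partial>exp_samples)
        = (\<integral>\<^sup>+w. indicator {s..s+1} t * \<Phi> (t - w/r) (x' w) \<partial>expM)"
      unfolding inner by (rule nn_integral_cmult[symmetric]) (use m in simp)
  qed
  also have "\<dots> = (\<integral>\<^sup>+w. (\<integral>\<^sup>+t. indicator {s..s+1} t * \<Phi> (t - w/r) (x' w) \<partial>lborel) \<partial>expM)"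
    by (rule LE.Fubini'[OF \<Phi>m, symmetric])
  also have "\<dots> \<le> (\<integral>\<^sup>+w. C * (\<integral>\<^sup>+\<omega>. ennreal (exp (s + 1 - pdmp_jump_time l0 l1 i (w ## \<omega>) (Suc n))) \<partial>exp_samples) \<partial>expM)"
  proof (rule nn_integral_mono_AE)
    show "AE w in expM. (\<integral>\<^sup>+t. indicator {s..s+1} t * \<Phi> (t - w/r) (x' w) \<partial>lborel)
        \<le> C * (\<integral>\<^sup>+\<omega>. ennreal (exp (s + 1 - pdmp_jump_time l0 l1 i (w ## \<omega>) (Suc n))) \<partial>exp_samples)"
    proof (rule eventually_mono[OF AE_expM_nonneg])
      fix w :: real assume w: "0 \<le> w"
      have x'1: "fst (x' w) \<le> 1" unfolding x'_def
        using w r ab Suc.prems by (intro flow_fst_le1) auto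
      have "(\<integral>\<^sup>+t. indicator {s..s+1} t * \<Phi> (t - w/r) (x' w) \<partial>lborel)
          = ennreal \<bar>1\<bar> * (\<integral>\<^sup>+\<tau>. indicator {s..s+1} (w/r + 1 * \<tau>) * \<Phi> ((w/r + 1 * \<tau>) - w/r) (x' w) \<partial>lborel)"
      proof (rule nn_integral_real_affine)
        have c: "(\<lambda>\<tau>::real. \<tau> - w/r) \<in> borel_measurable borel" by measurable
        have "(\<lambda>\<tau>. \<Phi> (\<tau> - w/r) (x' w)) \<in> borel_measurable borel"
          using measurable_compose[OF c \<Phi>m1[of "x' w"]] .
        then show "(\<lambda>t. indicator {s..s+1} t * \<Phi> (t - w/r) (x' w)) \<in> borel_measurable borel"
          by (intro borel_measurable_times_ennreal) auto
      qed simp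
      also have "\<dots> = (\<integral>\<^sup>+\<tau>. indicator {(s - w/r)..(s - w/r)+1} \<tau> * \<Phi> \<tau> (x' w) \<partial>lborel)"
      proof (simp only: abs_one ennreal_1 mult_1_left, intro nn_integral_cong)
        fix \<tau> :: real assume "\<tau> \<in> space lborel"
        have "indicator {s..s+1} (w/r + \<tau>) = (indicator {(s - w/r)..(s - w/r)+1} \<tau> :: ennreal)"
          by (auto simp: indicator_def)
        then show "indicator {s..s+1} (w/r + \<tau>) * \<Phi> (w/r + \<tau> - w/r) (x' w) = indicator {(s - w/r)..(s - w/r)+1} \<tau> * \<Phi> \<tau> (x' w)"
          by simp
      qed
      also have "\<dots> \<le> C * (\<integral>\<^sup>+\<omega>. ennreal (exp ((s - w/r) + 1 - pdmp_jump_time l0 l1 (Suc i) \<omega> n)) \<partial>exp_samples)"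
        using Suc.IH[OF x'1, where i="Suc i" and s="s - w/r"] unfolding \<Phi>_def C_def .
      also have "\<dots> = C * (\<integral>\<^sup>+\<omega>. ennreal (exp (s + 1 - pdmp_jump_time l0 l1 i (w ## \<omega>) (Suc n))) \<partial>exp_samples)"
        by (intro arg_cong2[where f = "(*)"] nn_integral_cong) (simp_all add: jt_Suc r_def[symmetric] algebra_simps)
      finally show "(\<integral>\<^sup>+t. indicator {s..s+1} t * \<Phi> (t - w/r) (x' w) \<partial>lborel)
        \<le> C * (\<integral>\<^sup>+\<omega>. ennreal (exp (s + 1 - pdmp_jump_time l0 l1 i (w ## \<omega>) (Suc n))) \<partial>exp_samples)" .
    qed
  qed
  also have "\<dots> = C * (\<integral>\<^sup>+w. (\<integral>\<^sup>+\<omega>. ennreal (exp (s + 1 - pdmp_jump_time l0 l1 i (w ## \<omega>) (Suc n))) \<partial>exp_samples) \<partial>expM)"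
    by (rule nn_integral_cmult) measurable
  also have "(\<integral>\<^sup>+w. (\<integral>\<^sup>+\<omega>. ennreal (exp (s + 1 - pdmp_jump_time l0 l1 i (w ## \<omega>) (Suc n))) \<partial>exp_samples) \<partial>expM)
      = (\<integral>\<^sup>+\<omega>. ennreal (exp (s + 1 - pdmp_jump_time l0 l1 i \<omega> (Suc n))) \<partial>exp_samples)"
    by (rule nn_integral_S[symmetric]) measurable
  finally show ?case by (simp add: C_def)
qed

lemma ennreal_geom_zero:
  fixes x :: ennreal and c q :: real
  assumes "\<And>n. x \<le> ennreal (c * q ^ Suc n)" "0 \<le> q" "q < 1"
  shows "x = 0"
proof -
  have "(\<lambda>n. c * q ^ Suc n) \<longlonglongrightarrow> c * 0"
    using assms by (intro tendsto_mult tendsto_const LIMSEQ_Suc[OF LIMSEQ_power_zero]) auto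
  then have "(\<lambda>n. ennreal (c * q ^ Suc n)) \<longlonglongrightarrow> ennreal 0"
    by (intro tendsto_ennrealI) simp
  then have "x \<le> ennreal 0" using assms(1) by (intro LIMSEQ_le_const) auto
  then show ?thesis by simp
qed

lemma bad_null:
  assumes l: "0 < l0" "0 < l1"
  shows "emeasure exp_samples {\<omega> \<in> space exp_samples. \<forall>k. pdmp_jump_time l0 l1 i \<omega> (Suc k) \<le> t} = 0"
proof (rule ennreal_geom_zero)
  fix n
  let ?Bad = "{\<omega> \<in> space exp_samples. \<forall>k. pdmp_jump_time l0 l1 i \<omega> (Suc k) \<le> t}"
  have "emeasure exp_samples ?Bad \<le> emeasure exp_samples {\<omega> \<in> space exp_samples. pdmp_jump_time l0 l1 i \<omega> (Suc n) \<le> t}"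
    by (intro emeasure_mono) (auto, measurable)
  also have "\<dots> = (\<integral>\<^sup>+\<omega>. indicator {\<omega> \<in> space exp_samples. pdmp_jump_time l0 l1 i \<omega> (Suc n) \<le> t} \<omega> \<partial>exp_samples)"
    by (rule nn_integral_indicator[symmetric]) measurable
  also have "\<dots> \<le> (\<integral>\<^sup>+\<omega>. ennreal (exp t) * ennreal (exp (- pdmp_jump_time l0 l1 i \<omega> (Suc n))) \<partial>exp_samples)"
  proof (rule nn_integral_mono)
    fix \<omega>
    show "indicator {\<omega> \<in> space exp_samples. pdmp_jump_time l0 l1 i \<omega> (Suc n) \<le> t} \<omega>
        \<le> ennreal (exp t) * ennreal (exp (- pdmp_jump_time l0 l1 i \<omega> (Suc n)))"
    proof (cases "pdmp_jump_time l0 l1 i \<omega> (Suc n) \<le> t")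
      case True
      have "1 \<le> exp (t - pdmp_jump_time l0 l1 i \<omega> (Suc n))" using True by simp
      also have "\<dots> = exp t * exp (- pdmp_jump_time l0 l1 i \<omega> (Suc n))" by (simp add: exp_diff exp_minus field_simps)
      finally have "ennreal 1 \<le> ennreal (exp t * exp (- pdmp_jump_time l0 l1 i \<omega> (Suc n)))" by (rule ennreal_leI)
      then show ?thesis by (simp add: ennreal_mult indicator_def)
    qed (simp add: indicator_def)
  qed
  also have "\<dots> = ennreal (exp t) * (\<integral>\<^sup>+\<omega>. ennreal (exp (- pdmp_jump_time l0 l1 i \<omega> (Suc n))) \<partial>exp_samples)"
    by (rule nn_integral_cmult) measurable
  also have "\<dots> \<le> ennreal (exp t) * ennreal (rho l0 l1 ^ Suc n)"
    by (intro mult_left_mono Ee_bound[OF l]) auto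
  also have "\<dots> = ennreal (exp t * rho l0 l1 ^ Suc n)"
    using rho_bounds[OF l] by (simp add: ennreal_mult)
  finally show "emeasure exp_samples ?Bad \<le> ennreal (exp t * rho l0 l1 ^ Suc n)" .
qed (use rho_bounds[OF l] in auto)

lemma state_eq:
  "pdmp_state \<alpha> \<beta> l0 l1 t (x, i) \<omega> =
    (let k = (LEAST k. t < pdmp_jump_time l0 l1 i \<omega> (Suc k))
     in (pdmp_flow \<alpha> \<beta> (pdmp_mode i k) (t - pdmp_jump_time l0 l1 i \<omega> k) (pdmp_pos \<alpha> \<beta> l0 l1 x i \<omega> k), pdmp_mode i k))"
  by (simp add: pdmp_state_def Let_def)

lemma Least_jt_le:
  assumes "0 \<le> t"
  shows "pdmp_jump_time l0 l1 i \<omega> (LEAST k. t < pdmp_jump_time l0 l1 i \<omega> (Suc k)) \<le> t"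
proof (cases "(LEAST k. t < pdmp_jump_time l0 l1 i \<omega> (Suc k))")
  case 0
  then show ?thesis using assms by simp
next
  case (Suc m)
  then have "m < (LEAST k. t < pdmp_jump_time l0 l1 i \<omega> (Suc k))" by simp
  then have "\<not> t < pdmp_jump_time l0 l1 i \<omega> (Suc m)" by (rule not_less_Least)
  then show ?thesis using Suc by simp
qed

lemma pathwise:
  fixes \<delta> :: real
  assumes "0 \<le> t" "fst x \<le> 1" "exp (- \<alpha> * t) < \<delta>" "0 < \<delta>"
    and BK: "B \<subseteq> {y. \<delta> \<le> snd y \<and> snd y + \<delta> \<le> fst y \<and> fst y \<le> 1}"
  shows "indicator (B \<times> {0}) (pdmp_state \<alpha> \<beta> l0 l1 t (x, i) \<omega>) \<le> (\<Sum>n. tm \<alpha> \<beta> l0 l1 B (Suc n) t x i \<omega>)"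
proof -
  define k where "k = (LEAST k. t < pdmp_jump_time l0 l1 i \<omega> (Suc k))"
  have Tk: "pdmp_jump_time l0 l1 i \<omega> k \<le> t" unfolding k_def by (rule Least_jt_le[OF assms(1)])
  show ?thesis
  proof (cases "pdmp_state \<alpha> \<beta> l0 l1 t (x, i) \<omega> \<in> B \<times> {0}")
    case False then show ?thesis by simp
  next
    case True
    then have m0: "pdmp_mode i k = 0" and inB: "pdmp_flow \<alpha> \<beta> 0 (t - pdmp_jump_time l0 l1 i \<omega> k) (pdmp_pos \<alpha> \<beta> l0 l1 x i \<omega> k) \<in> B"
      unfolding state_eq Let_def k_def[symmetric] by auto
    show ?thesis
    proof (cases k)
      case 0
      then have "pdmp_flow \<alpha> \<beta> 0 t x \<in> B" using inB by simp
      then have "fst (pdmp_flow \<alpha> \<beta> 0 t x) \<ge> 2 * \<delta>" using BK by force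
      moreover have "fst (pdmp_flow \<alpha> \<beta> 0 t x) < \<delta>"
      proof -
        have "fst (pdmp_flow \<alpha> \<beta> 0 t x) = fst x * exp (- \<alpha> * t)" by (simp add: pdmp_flow_def)
        also have "\<dots> \<le> exp (- \<alpha> * t)"
        proof (cases "fst x \<ge> 0")
          case True then show ?thesis using assms(2) by (simp add: mult_left_le_one_le)
        next
          case False then show ?thesis by (smt (verit) exp_gt_zero mult_nonpos_nonneg)
        qed
        finally show ?thesis using assms(3) by simp
      qed
      ultimately show ?thesis using assms(4) by simp
    next
      case (Suc m)
      have "tm \<alpha> \<beta> l0 l1 B (Suc m) t x i \<omega> = 1"
        using Tk m0 inB Suc by (simp add: tm_def)
      moreover have "tm \<alpha> \<beta> l0 l1 B (Suc m) t x i \<omega> \<le> (\<Sum>n. tm \<alpha> \<beta> l0 l1 B (Suc n) t x i \<omega>)"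
        using sum_le_suminf[of "\<lambda>n. tm \<alpha> \<beta> l0 l1 B (Suc n) t x i \<omega>" "{m}"] by (simp add: summableI)
      ultimately show ?thesis by (simp add: indicator_def)
    qed
  qed
qed

definition Dx :: "real \<times> real \<Rightarrow> real" where "Dx y = max 0 (fst y - 1)"

lemma flowD:
  assumes "j < 2" "0 \<le> h" "0 < \<alpha>"
  shows "Dx (pdmp_flow \<alpha> \<beta> j h y) \<le> Dx y * exp (- \<alpha> * h)"
proof -
  have e: "exp (- \<alpha> * h) \<le> 1" "exp (- \<alpha> * h) > 0" using assms by auto
  consider "j = 0" | "j = 1" using assms by linarith
  then show ?thesis
  proof cases
    case 1
    have "fst y * exp (- \<alpha> * h) - 1 \<le> max 0 (fst y - 1) * exp (- \<alpha> * h)"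
    proof (cases "fst y \<le> 1")
      case True
      have "fst y * exp (- \<alpha> * h) \<le> 1"
      proof (cases "fst y \<ge> 0")
        case True2: True
        have "fst y * exp (- \<alpha> * h) \<le> 1 * 1" using True True2 e by (intro mult_mono) auto
        then show ?thesis by simp
      next
        case False
        then show ?thesis using e by (smt (verit) mult_nonpos_nonneg)
      qed
      then show ?thesis using e by (smt (verit) max.cobounded1 mult_nonneg_nonneg)
    next
      case False
      then show ?thesis using e by (simp add: max_def algebra_simps)
    qed
    moreover have "0 \<le> max 0 (fst y - 1) * exp (- \<alpha> * h)" using e by simp
    ultimately show ?thesis using 1 by (simp add: Dx_def pdmp_flow_def)
  next
    case 2
    have "max 0 ((fst y - 1) * exp (- \<alpha> * h)) = max 0 (fst y - 1) * exp (- \<alpha> * h)"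
    proof (cases "fst y \<le> 1")
      case True
      then have "(fst y - 1) * exp (- \<alpha> * h) \<le> 0" using e by (simp add: mult_nonpos_nonneg)
      then show ?thesis using True by simp
    next
      case False
      then show ?thesis using e by simp
    qed
    then show ?thesis using 2 by (simp add: Dx_def pdmp_flow_def)
  qed
qed

lemma jt_Suc_last: "pdmp_jump_time l0 l1 i \<omega> (Suc k) = pdmp_jump_time l0 l1 i \<omega> k + pdmp_hold l0 l1 i \<omega> k"
  by (simp add: pdmp_jump_time_def)

lemma hold_nonneg: "0 < l0 \<Longrightarrow> 0 < l1 \<Longrightarrow> 0 \<le> \<omega> !! k \<Longrightarrow> 0 \<le> pdmp_hold l0 l1 i \<omega> k"
  by (simp add: pdmp_hold_def pdmp_rate_def)

lemma posD:
  assumes "0 < l0" "0 < l1" "0 < \<alpha>" "\<forall>n. 0 \<le> \<omega> !! n"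
  shows "Dx (pdmp_pos \<alpha> \<beta> l0 l1 x i \<omega> k) \<le> Dx x * exp (- \<alpha> * pdmp_jump_time l0 l1 i \<omega> k)"
proof (induction k)
  case 0 then show ?case by simp
next
  case (Suc k)
  have h: "0 \<le> pdmp_hold l0 l1 i \<omega> k" using assms by (intro hold_nonneg) auto
  have "Dx (pdmp_pos \<alpha> \<beta> l0 l1 x i \<omega> (Suc k)) \<le> Dx (pdmp_pos \<alpha> \<beta> l0 l1 x i \<omega> k) * exp (- \<alpha> * pdmp_hold l0 l1 i \<omega> k)"
    using assms h by (simp only: pdmp_pos.simps, intro flowD) (auto simp: pdmp_mode_def)
  also have "\<dots> \<le> Dx x * exp (- \<alpha> * pdmp_jump_time l0 l1 i \<omega> k) * exp (- \<alpha> * pdmp_hold l0 l1 i \<omega> k)"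
    by (intro mult_right_mono Suc.IH) auto
  also have "\<dots> = Dx x * exp (- \<alpha> * pdmp_jump_time l0 l1 i \<omega> (Suc k))"
    by (simp add: jt_Suc_last mult_exp_exp algebra_simps)
  finally show ?case .
qed

lemma stateD:
  assumes "0 < l0" "0 < l1" "0 < \<alpha>" "\<forall>n. 0 \<le> \<omega> !! n" "0 \<le> t"
  shows "Dx (fst (pdmp_state \<alpha> \<beta> l0 l1 t (x, i) \<omega>)) \<le> Dx x * exp (- \<alpha> * t)"
proof -
  define k where "k = (LEAST k. t < pdmp_jump_time l0 l1 i \<omega> (Suc k))"
  have Tk: "pdmp_jump_time l0 l1 i \<omega> k \<le> t" unfolding k_def by (rule Least_jt_le[OF assms(5)])
  have "Dx (fst (pdmp_state \<alpha> \<beta> l0 l1 t (x, i) \<omega>)) =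
      Dx (pdmp_flow \<alpha> \<beta> (pdmp_mode i k) (t - pdmp_jump_time l0 l1 i \<omega> k) (pdmp_pos \<alpha> \<beta> l0 l1 x i \<omega> k))"
    unfolding state_eq Let_def k_def by simp
  also have "\<dots> \<le> Dx (pdmp_pos \<alpha> \<beta> l0 l1 x i \<omega> k) * exp (- \<alpha> * (t - pdmp_jump_time l0 l1 i \<omega> k))"
    using Tk assms by (intro flowD) (auto simp: pdmp_mode_def)
  also have "\<dots> \<le> Dx x * exp (- \<alpha> * pdmp_jump_time l0 l1 i \<omega> k) * exp (- \<alpha> * (t - pdmp_jump_time l0 l1 i \<omega> k))"
    using assms by (intro mult_right_mono posD) auto
  also have "\<dots> = Dx x * exp (- \<alpha> * t)"
    by (simp add: mult_exp_exp algebra_simps)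
  finally show ?thesis .
qed

lemma inv_parts:
  assumes "pdmp_invariant \<alpha> \<beta> l0 l1 \<mu>"
  shows "prob_space \<mu>" "sets \<mu> = sets (borel \<Otimes>\<^sub>M count_space {0, 1})"
    "\<And>t A. 0 \<le> t \<Longrightarrow> A \<in> sets \<mu> \<Longrightarrow> emeasure \<mu> A = (\<integral>\<^sup>+ z. pdmp_kernel \<alpha> \<beta> l0 l1 t z A \<partial>\<mu>)"
  using assms unfolding pdmp_invariant_def by auto

lemma support:
  assumes inv: "pdmp_invariant \<alpha> \<beta> l0 l1 \<mu>" and a: "0 < \<alpha>" and l: "0 < l0" "0 < l1"
  shows "AE z in \<mu>. fst (fst z) \<le> 1"
proof -
  interpret Mu: prob_space \<mu> by (rule inv_parts(1)[OF inv])
  have sets\<mu>: "sets \<mu> = sets (borel \<Otimes>\<^sub>M count_space {0, 1})" by (rule inv_parts(2)[OF inv])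
  have Dm[measurable]: "(\<lambda>z. Dx (fst z)) \<in> borel_measurable \<mu>"
  proof -
    have "(\<lambda>z::(real\<times>real)\<times>nat. Dx (fst z)) \<in> borel_measurable (borel \<Otimes>\<^sub>M count_space {0, 1})"
      unfolding Dx_def by measurable
    then show ?thesis by (simp add: measurable_cong_sets[OF sets\<mu> refl])
  qed
  define A where "A c = {z \<in> space \<mu>. c < Dx (fst z)}" for c
  have Am: "A c \<in> sets \<mu>" for c unfolding A_def by measurable
  obtain N0 where N0: "{\<omega> \<in> space exp_samples. \<not> (\<forall>n. 0 \<le> \<omega> !! n)} \<subseteq> N0" "emeasure exp_samples N0 = 0" "N0 \<in> sets exp_samples"
    using AE_S_nonneg by (rule AE_E)
  have key: "emeasure \<mu> (A c) \<le> emeasure \<mu> (A (c * exp (\<alpha> * t)))" if c: "0 < c" and t: "0 \<le> t" for c t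
  proof -
    have "emeasure \<mu> (A c) = (\<integral>\<^sup>+ z. pdmp_kernel \<alpha> \<beta> l0 l1 t z (A c) \<partial>\<mu>)"
      by (rule inv_parts(3)[OF inv t Am])
    also have "\<dots> \<le> (\<integral>\<^sup>+ z. indicator (A (c * exp (\<alpha> * t))) z \<partial>\<mu>)"
    proof (rule nn_integral_mono)
      fix z assume z: "z \<in> space \<mu>"
      obtain x i where zxi: "z = (x, i)" by (cases z)
      show "pdmp_kernel \<alpha> \<beta> l0 l1 t z (A c) \<le> indicator (A (c * exp (\<alpha> * t))) z"
      proof (cases "z \<in> A (c * exp (\<alpha> * t))")
        case True
        then show ?thesis by (simp add: pdmp_kernel_def ES.emeasure_le_1)
      next
        case False
        then have Dz: "Dx x \<le> c * exp (\<alpha> * t)" using z zxi by (auto simp: A_def)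
        have "Dx x * exp (- \<alpha> * t) \<le> c * exp (\<alpha> * t) * exp (- \<alpha> * t)"
          using Dz by (intro mult_right_mono) auto
        also have "\<dots> = c" by (simp add: mult.assoc mult_exp_exp)
        finally have Dc: "Dx x * exp (- \<alpha> * t) \<le> c" .
        have "{\<omega> \<in> space exp_samples. pdmp_state \<alpha> \<beta> l0 l1 t z \<omega> \<in> A c} \<subseteq> N0"
        proof
          fix \<omega> assume \<omega>: "\<omega> \<in> {\<omega> \<in> space exp_samples. pdmp_state \<alpha> \<beta> l0 l1 t z \<omega> \<in> A c}"
          show "\<omega> \<in> N0"
          proof (rule ccontr)
            assume "\<omega> \<notin> N0"
            then have "\<forall>n. 0 \<le> \<omega> !! n" using N0(1) \<omega> by auto
            then have "Dx (fst (pdmp_state \<alpha> \<beta> l0 l1 t (x, i) \<omega>)) \<le> Dx x * exp (- \<alpha> * t)"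
              using a l t by (intro stateD) auto
            moreover have "c < Dx (fst (pdmp_state \<alpha> \<beta> l0 l1 t (x, i) \<omega>))"
              using \<omega> zxi by (auto simp: A_def)
            ultimately show False using Dc by simp
          qed
        qed
        then have "pdmp_kernel \<alpha> \<beta> l0 l1 t z (A c) \<le> emeasure exp_samples N0"
          unfolding pdmp_kernel_def by (rule emeasure_mono) (rule N0(3))
        then show ?thesis using N0(2) by simp
      qed
    qed
    also have "\<dots> = emeasure \<mu> (A (c * exp (\<alpha> * t)))" by (rule nn_integral_indicator) (rule Am)
    finally show ?thesis .
  qed
  have null: "emeasure \<mu> (A c) = 0" if c: "0 < c" for c
  proof -
    define Bs where "Bs n = A (c * exp (\<alpha> * real n))" for n
    have "(\<lambda>n. emeasure \<mu> (Bs n)) \<longlonglongrightarrow> emeasure \<mu> (\<Inter>n. Bs n)"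
    proof (rule Lim_emeasure_decseq)
      show "range Bs \<subseteq> sets \<mu>" using Am by (auto simp: Bs_def)
      show "decseq Bs"
      proof (rule decseq_SucI)
        fix n
        have "c * exp (\<alpha> * real n) \<le> c * exp (\<alpha> * real (Suc n))" using c a by simp
        then show "Bs (Suc n) \<subseteq> Bs n" by (auto simp: Bs_def A_def)
      qed
      show "emeasure \<mu> (Bs i) \<noteq> \<infinity>" for i by simp
    qed
    moreover have "(\<Inter>n. Bs n) = {}"
    proof (rule ccontr)
      assume "(\<Inter>n. Bs n) \<noteq> {}"
      then obtain z where "\<forall>n. z \<in> Bs n" by blast
      then have zn: "c * exp (\<alpha> * real n) < Dx (fst z)" for n by (auto simp: Bs_def A_def)
      obtain n :: nat where n: "Dx (fst z) / (c * \<alpha>) < real n" using reals_Archimedean2 by blast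
      have "Dx (fst z) < c * \<alpha> * real n" using n c a by (simp add: divide_less_eq mult.commute)
      also have "\<dots> \<le> c * exp (\<alpha> * real n)"
      proof -
        have "\<alpha> * real n \<le> exp (\<alpha> * real n)" using exp_ge_add_one_self[of "\<alpha> * real n"] by linarith
        then show ?thesis using c by (simp add: mult.assoc)
      qed
      finally show False using zn[of n] by simp
    qed
    ultimately have "(\<lambda>n. emeasure \<mu> (Bs n)) \<longlonglongrightarrow> 0" by simp
    moreover have "emeasure \<mu> (A c) \<le> emeasure \<mu> (Bs n)" for n
      unfolding Bs_def using key[OF c, of "real n"] by simp
    ultimately have "emeasure \<mu> (A c) \<le> 0" by (intro LIMSEQ_le_const) auto
    then show ?thesis by simp
  qed
  have "emeasure \<mu> (\<Union>n. A (1 / Suc n)) = 0"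
    by (rule emeasure_UN_eq_0) (auto intro!: null Am)
  moreover have "(\<Union>n. A (1 / Suc n)) \<in> sets \<mu>" using Am by auto
  moreover have "{z \<in> space \<mu>. \<not> fst (fst z) \<le> 1} \<subseteq> (\<Union>n. A (1 / Suc n))"
  proof
    fix z assume z: "z \<in> {z \<in> space \<mu>. \<not> fst (fst z) \<le> 1}"
    then have "0 < Dx (fst z)" by (simp add: Dx_def)
    then obtain n :: nat where "1 / Suc n < Dx (fst z)"
      by (metis nat_approx_posE of_nat_Suc)
    then show "z \<in> (\<Union>n. A (1 / Suc n))" using z by (auto simp: A_def)
  qed
  ultimately show ?thesis by (intro AE_I') auto
qed

lemma mu0_bound:
  fixes \<alpha> \<beta> \<delta> l0 l1 s :: real and B :: "(real \<times> real) set"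
  assumes ab: "0 < \<beta>" "\<beta> < \<alpha>" and d: "0 < \<delta>" "\<delta> < 1" and l: "0 < l0" "0 < l1"
    and inv: "pdmp_invariant \<alpha> \<beta> l0 l1 \<mu>"
    and Bm[measurable]: "B \<in> sets borel"
    and BK: "B \<subseteq> {y. \<delta> \<le> snd y \<and> snd y + \<delta> \<le> fst y \<and> fst y \<le> 1}"
    and s: "0 \<le> s" "exp (- \<alpha> * s) < \<delta>"
  shows "emeasure \<mu> (B \<times> {0}) \<le> ennreal l1 * (ennreal (1/\<delta>) * (ennreal (1/(\<beta>*\<delta>)) * (ennreal (1/(\<alpha>*\<delta>)) * emeasure lborel B)))
      * ennreal (exp (s+1)) * ennreal (1 / (1 - rho l0 l1))"
proof -
  interpret Mu: prob_space \<mu> by (rule inv_parts(1)[OF inv])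
  interpret LM: pair_sigma_finite lborel \<mu>
    by (intro pair_sigma_finite.intro lborel.sigma_finite_measure_axioms Mu.sigma_finite_measure_axioms)
  have sets\<mu>: "sets \<mu> = sets (borel \<Otimes>\<^sub>M count_space {0, 1})" by (rule inv_parts(2)[OF inv])
  have a: "0 < \<alpha>" using ab by simp
  define C where "C = ennreal l1 * (ennreal (1/\<delta>) * (ennreal (1/(\<beta>*\<delta>)) * (ennreal (1/(\<alpha>*\<delta>)) * emeasure lborel B)))"
  define \<rho> where "\<rho> = rho l0 l1"
  have \<rho>: "0 < \<rho>" "\<rho> < 1" using rho_bounds[OF l] by (auto simp: \<rho>_def)
  have fstm[measurable]: "(\<lambda>z. fst z) \<in> measurable \<mu> borel"
    using measurable_fst[of "borel :: (real\<times>real) measure" "count_space {0,1::nat}"]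
    by (simp add: measurable_cong_sets[OF sets\<mu> refl])
  have sndm[measurable]: "(\<lambda>z. snd z) \<in> measurable \<mu> (count_space {0,1})"
    using measurable_snd[of "borel :: (real\<times>real) measure" "count_space {0,1::nat}"]
    by (simp add: measurable_cong_sets[OF sets\<mu> refl])
  define \<Phi> where "\<Phi> n t z = (\<integral>\<^sup>+\<omega>. tm \<alpha> \<beta> l0 l1 B (Suc n) t (fst z) (snd z) \<omega> \<partial>exp_samples)" for n t z
  have tmm: "(\<lambda>u. tm \<alpha> \<beta> l0 l1 B (Suc n) (fst (fst u)) (fst (snd (fst u))) (snd (snd (fst u))) (snd u))
      \<in> borel_measurable ((lborel \<Otimes>\<^sub>M \<mu>) \<Otimes>\<^sub>M exp_samples)" for n
  proof (rule measurable_compose_countable'[where I = "{0,1}" and g = "\<lambda>u. snd (snd (fst u))"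
      and f = "\<lambda>i u. tm \<alpha> \<beta> l0 l1 B (Suc n) (fst (fst u)) (fst (snd (fst u))) i (snd u)"])
    show "(\<lambda>u. tm \<alpha> \<beta> l0 l1 B (Suc n) (fst (fst u)) (fst (snd (fst u))) i (snd u))
      \<in> borel_measurable ((lborel \<Otimes>\<^sub>M \<mu>) \<Otimes>\<^sub>M exp_samples)" if "i \<in> {0,1}" for i
      by measurable
    show "(\<lambda>u. snd (snd (fst u))) \<in> measurable ((lborel \<Otimes>\<^sub>M \<mu>) \<Otimes>\<^sub>M exp_samples) (count_space {0,1})"
      by measurable
  qed simp
  have \<Phi>m: "(\<lambda>(t,z). \<Phi> n t z) \<in> borel_measurable (lborel \<Otimes>\<^sub>M \<mu>)" for n
  proof -
    have "(\<lambda>tz. \<integral>\<^sup>+\<omega>. tm \<alpha> \<beta> l0 l1 B (Suc n) (fst tz) (fst (snd tz)) (snd (snd tz)) \<omega> \<partial>exp_samples) \<in> borel_measurable (lborel \<Otimes>\<^sub>M \<mu>)"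
      by (rule ES.borel_measurable_nn_integral) (use tmm[of n] in \<open>simp add: case_prod_beta'\<close>)
    then show ?thesis by (simp add: \<Phi>_def case_prod_beta')
  qed
  define Q where "Q t z = (\<Sum>n. \<Phi> n t z)" for t z
  have Qz: "(\<lambda>z. Q t z) \<in> borel_measurable \<mu>" for t
  proof -
    have "(\<lambda>z. \<Phi> n t z) \<in> borel_measurable \<mu>" for n
      using measurable_Pair2[OF \<Phi>m[of n], of t] by simp
    then show ?thesis unfolding Q_def by measurable
  qed
  have Qm: "(\<lambda>(t,z). indicator {s..s+1} t * Q t z) \<in> borel_measurable (lborel \<Otimes>\<^sub>M \<mu>)"
  proof -
    have [measurable]: "(\<lambda>tz. \<Phi> n (fst tz) (snd tz)) \<in> borel_measurable (lborel \<Otimes>\<^sub>M \<mu>)" for n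
      using \<Phi>m[of n] by (simp add: case_prod_beta')
    show ?thesis unfolding Q_def case_prod_beta' by measurable
  qed
  have kern: "pdmp_kernel \<alpha> \<beta> l0 l1 t z (B \<times> {0}) \<le> Q t z" if t: "s \<le> t" and z1: "fst (fst z) \<le> 1" for t z
  proof -
    obtain x i where zxi: "z = (x, i)" by (cases z)
    let ?X = "{\<omega> \<in> space exp_samples. pdmp_state \<alpha> \<beta> l0 l1 t z \<omega> \<in> B \<times> {0}}"
    have et: "exp (- \<alpha> * t) < \<delta>"
    proof -
      have "exp (- \<alpha> * t) \<le> exp (- \<alpha> * s)" using t a by (simp add: mult_left_mono)
      then show ?thesis using s by linarith
    qed
    show ?thesis
    proof (cases "?X \<in> sets exp_samples")
      case True
      have "pdmp_kernel \<alpha> \<beta> l0 l1 t z (B \<times> {0}) = (\<integral>\<^sup>+\<omega>. indicator ?X \<omega> \<partial>exp_samples)"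
        unfolding pdmp_kernel_def using True by simp
      also have "\<dots> \<le> (\<integral>\<^sup>+\<omega>. (\<Sum>n. tm \<alpha> \<beta> l0 l1 B (Suc n) t x i \<omega>) \<partial>exp_samples)"
      proof (rule nn_integral_mono)
        fix \<omega> assume "\<omega> \<in> space exp_samples"
        then have "indicator ?X \<omega> = (indicator (B \<times> {0}) (pdmp_state \<alpha> \<beta> l0 l1 t (x, i) \<omega>) :: ennreal)"
          by (simp add: zxi indicator_def)
        also have "\<dots> \<le> (\<Sum>n. tm \<alpha> \<beta> l0 l1 B (Suc n) t x i \<omega>)"
          using s t z1 zxi et d BK by (intro pathwise) auto
        finally show "indicator ?X \<omega> \<le> (\<Sum>n. tm \<alpha> \<beta> l0 l1 B (Suc n) t x i \<omega>)" .
      qed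
      also have "\<dots> = (\<Sum>n. (\<integral>\<^sup>+\<omega>. tm \<alpha> \<beta> l0 l1 B (Suc n) t x i \<omega> \<partial>exp_samples))"
        by (rule nn_integral_suminf) measurable
      also have "\<dots> = Q t z" by (simp add: Q_def \<Phi>_def zxi)
      finally show ?thesis .
    next
      case False
      then show ?thesis by (simp add: pdmp_kernel_def emeasure_notin_sets)
    qed
  qed
  have Bsets: "B \<times> {0} \<in> sets \<mu>" unfolding sets\<mu> by (intro pair_measureI) auto
  have eq1: "emeasure \<mu> (B \<times> {0}) \<le> (\<integral>\<^sup>+z. Q t z \<partial>\<mu>)" if t: "t \<in> {s..s+1}" for t
  proof -
    have "emeasure \<mu> (B \<times> {0}) = (\<integral>\<^sup>+z. pdmp_kernel \<alpha> \<beta> l0 l1 t z (B \<times> {0}) \<partial>\<mu>)"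
      using t s by (intro inv_parts(3)[OF inv] Bsets) auto
    also have "\<dots> \<le> (\<integral>\<^sup>+z. Q t z \<partial>\<mu>)"
      using support[OF inv a l] t by (intro nn_integral_mono_AE) (auto elim!: eventually_mono intro!: kern)
    finally show ?thesis .
  qed
  have perz: "(\<integral>\<^sup>+t. indicator {s..s+1} t * Q t z \<partial>lborel) \<le> C * ennreal (exp (s+1)) * ennreal (1 / (1 - \<rho>))"
    if z: "z \<in> space \<mu>" and z1: "fst (fst z) \<le> 1" for z
  proof -
    have m1: "(\<lambda>t. indicator {s..s+1} t * \<Phi> n t z) \<in> borel_measurable lborel" for n
    proof -
      have "(\<lambda>t. \<Phi> n t z) \<in> borel_measurable lborel" using measurable_Pair1[OF \<Phi>m[of n] z] by simp
      then show ?thesis by measurable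
    qed
    have "(\<integral>\<^sup>+t. indicator {s..s+1} t * Q t z \<partial>lborel) = (\<integral>\<^sup>+t. (\<Sum>n. indicator {s..s+1} t * \<Phi> n t z) \<partial>lborel)"
      by (simp add: Q_def)
    also have "\<dots> = (\<Sum>n. (\<integral>\<^sup>+t. indicator {s..s+1} t * \<Phi> n t z \<partial>lborel))"
      by (rule nn_integral_suminf) (rule m1)
    also have "\<dots> \<le> (\<Sum>n. C * (ennreal (exp (s+1)) * ennreal (\<rho> ^ n)))"
    proof (intro suminf_le summableI)
      fix n
      have "(\<integral>\<^sup>+t. indicator {s..s+1} t * \<Phi> n t z \<partial>lborel)
          \<le> C * (\<integral>\<^sup>+\<omega>. ennreal (exp (s + 1 - pdmp_jump_time l0 l1 (snd z) \<omega> n)) \<partial>exp_samples)"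
        unfolding \<Phi>_def C_def by (rule claim[OF ab d l Bm BK z1])
      also have "(\<integral>\<^sup>+\<omega>. ennreal (exp (s + 1 - pdmp_jump_time l0 l1 (snd z) \<omega> n)) \<partial>exp_samples)
          = (\<integral>\<^sup>+\<omega>. ennreal (exp (s+1)) * ennreal (exp (- pdmp_jump_time l0 l1 (snd z) \<omega> n)) \<partial>exp_samples)"
        by (intro nn_integral_cong) (simp add: ennreal_mult[symmetric] mult_exp_exp)
      also have "\<dots> = ennreal (exp (s+1)) * (\<integral>\<^sup>+\<omega>. ennreal (exp (- pdmp_jump_time l0 l1 (snd z) \<omega> n)) \<partial>exp_samples)"
        by (rule nn_integral_cmult) measurable
      also have "\<dots> \<le> ennreal (exp (s+1)) * ennreal (\<rho> ^ n)"
        unfolding \<rho>_def by (intro mult_left_mono Ee_bound[OF l]) auto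
      finally show "(\<integral>\<^sup>+t. indicator {s..s+1} t * \<Phi> n t z \<partial>lborel) \<le> C * (ennreal (exp (s+1)) * ennreal (\<rho> ^ n))"
        by (simp add: mult_left_mono)
    qed
    also have "\<dots> = C * ennreal (exp (s+1)) * (\<Sum>n. ennreal (\<rho> ^ n))"
      by (simp add: mult.assoc)
    also have "(\<Sum>n. ennreal (\<rho> ^ n)) = ennreal (1 / (1 - \<rho>))"
    proof -
      have "(\<Sum>n. ennreal (\<rho> ^ n)) = ennreal (\<Sum>n. \<rho> ^ n)"
        using \<rho> by (intro suminf_ennreal2) (auto intro: summable_geometric)
      also have "(\<Sum>n. \<rho> ^ n) = 1 / (1 - \<rho>)" using \<rho> by (intro suminf_geometric) auto
      finally show ?thesis .
    qed
    finally show ?thesis .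
  qed
  have "emeasure \<mu> (B \<times> {0}) = (\<integral>\<^sup>+t. indicator {s..s+1} t * emeasure \<mu> (B \<times> {0}) \<partial>lborel)"
    by (subst nn_integral_multc) auto
  also have "\<dots> \<le> (\<integral>\<^sup>+t. indicator {s..s+1} t * (\<integral>\<^sup>+z. Q t z \<partial>\<mu>) \<partial>lborel)"
  proof (rule nn_integral_mono)
    fix t
    show "indicator {s..s+1} t * emeasure \<mu> (B \<times> {0}) \<le> indicator {s..s+1} t * (\<integral>\<^sup>+z. Q t z \<partial>\<mu>)"
      by (cases "t \<in> {s..s+1}") (auto intro: eq1)
  qed
  also have "\<dots> = (\<integral>\<^sup>+t. (\<integral>\<^sup>+z. indicator {s..s+1} t * Q t z \<partial>\<mu>) \<partial>lborel)"
    by (intro nn_integral_cong nn_integral_cmult[symmetric] Qz)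
  also have "\<dots> = (\<integral>\<^sup>+z. (\<integral>\<^sup>+t. indicator {s..s+1} t * Q t z \<partial>lborel) \<partial>\<mu>)"
    by (rule LM.Fubini'[symmetric]) (rule Qm)
  also have "\<dots> \<le> (\<integral>\<^sup>+z. C * ennreal (exp (s+1)) * ennreal (1 / (1 - \<rho>)) \<partial>\<mu>)"
  proof (rule nn_integral_mono_AE)
    have "AE z in \<mu>. z \<in> space \<mu> \<and> fst (fst z) \<le> 1"
      by (intro eventually_conj AE_space support[OF inv a l])
    then show "AE z in \<mu>. (\<integral>\<^sup>+t. indicator {s..s+1} t * Q t z \<partial>lborel) \<le> C * ennreal (exp (s+1)) * ennreal (1 / (1 - \<rho>))"
      by (rule eventually_mono) (auto intro: perz)
  qed
  also have "\<dots> = C * ennreal (exp (s+1)) * ennreal (1 / (1 - \<rho>))"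
    by (simp add: Mu.emeasure_space_1)
  finally show ?thesis by (simp add: C_def \<rho>_def)
qed

lemma K_props:
  assumes ab: "0 < \<beta>" "\<beta> < \<alpha>" and y: "y \<in> Gamma_r \<alpha> \<beta> \<union> boundary_Gamma1 \<alpha> \<beta>"
  shows "0 < snd y \<and> snd y < fst y \<and> fst y \<le> 1"
  using y
proof
  assume yr: "y \<in> Gamma_r \<alpha> \<beta>"
  then have yi: "y \<in> interior (Gamma \<alpha> \<beta>)" and yl: "snd y < fst y" by (auto simp: Gamma_r_def)
  then have yG: "y \<in> Gamma \<alpha> \<beta>" using interior_subset by blast
  obtain e where e: "e > 0" "ball y e \<subseteq> Gamma \<alpha> \<beta>" using yi by (auto simp: mem_interior)
  have "(fst y, snd y - e/2) \<in> ball y e"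
    using e by (cases y) (simp add: dist_Pair_Pair dist_real_def)
  then have "(fst y, snd y - e/2) \<in> Gamma \<alpha> \<beta>" using e by blast
  then have "0 \<le> snd y - e/2" by (simp add: Gamma_def)
  then have s0: "0 < snd y" using e by simp
  have "fst y \<le> 1 - (1 - snd y) powr (\<alpha>/\<beta>)" using yG by (cases y) (simp add: Gamma_def)
  moreover have "0 \<le> (1 - snd y) powr (\<alpha>/\<beta>)" by simp
  ultimately have "fst y \<le> 1" by linarith
  then show ?thesis using s0 yl by simp
next
  assume "y \<in> boundary_Gamma1 \<alpha> \<beta>"
  then obtain t where t: "t > 0" and yt: "y = pdmp_flow \<alpha> \<beta> 1 t (0, 0)" by (auto simp: boundary_Gamma1_def)
  have y_eq: "y = (1 - exp (- \<alpha> * t), 1 - exp (- \<beta> * t))" unfolding yt by (simp add: pdmp_flow_def)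
  have "exp (- \<beta> * t) < 1" using t ab by simp
  moreover have "exp (- \<alpha> * t) < exp (- \<beta> * t)" using t ab by simp
  ultimately show ?thesis unfolding y_eq by simp
qed

lemma delta_exists:
  assumes ab: "0 < \<beta>" "\<beta> < \<alpha>" and K: "compact K" "K \<subseteq> Gamma_r \<alpha> \<beta> \<union> boundary_Gamma1 \<alpha> \<beta>"
  shows "\<exists>\<delta>. 0 < \<delta> \<and> \<delta> < 1 \<and> K \<subseteq> {y. \<delta> \<le> snd y \<and> snd y + \<delta> \<le> fst y \<and> fst y \<le> 1}"
proof (cases "K = {}")
  case True
  then show ?thesis by (intro exI[of _ "1/2"]) auto
next
  case False
  define f where "f y = min (snd y) (fst y - snd y)" for y :: "real \<times> real"
  have "continuous_on K f" unfolding f_def by (intro continuous_intros)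
  then have "compact (f ` K)" using K(1) by (rule compact_continuous_image)
  moreover have "f ` K \<noteq> {}" using False by simp
  ultimately obtain m where m: "m \<in> f ` K" "\<forall>v \<in> f ` K. m \<le> v"
    using compact_attains_inf[of "f ` K"] by blast
  have pos: "0 < f y" if "y \<in> K" for y
  proof -
    have "y \<in> Gamma_r \<alpha> \<beta> \<union> boundary_Gamma1 \<alpha> \<beta>" using K(2) that by blast
    then have "0 < snd y \<and> snd y < fst y \<and> fst y \<le> 1" by (rule K_props[OF ab])
    then show ?thesis by (simp add: f_def)
  qed
  have m0: "0 < m" using m(1) pos by auto
  define \<delta> where "\<delta> = min m (1/2)"
  have "K \<subseteq> {y. \<delta> \<le> snd y \<and> snd y + \<delta> \<le> fst y \<and> fst y \<le> 1}"
  proof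
    fix y assume y: "y \<in> K"
    have "m \<le> f y" using m(2) y by auto
    then have "\<delta> \<le> snd y" "\<delta> \<le> fst y - snd y" by (auto simp: \<delta>_def f_def)
    moreover have "fst y \<le> 1"
    proof -
      have "y \<in> Gamma_r \<alpha> \<beta> \<union> boundary_Gamma1 \<alpha> \<beta>" using K(2) y by blast
      then show ?thesis using K_props[OF ab] by blast
    qed
    ultimately show "y \<in> {y. \<delta> \<le> snd y \<and> snd y + \<delta> \<le> fst y \<and> fst y \<le> 1}" by simp
  qed
  moreover have "0 < \<delta>" "\<delta> < 1" using m0 by (auto simp: \<delta>_def)
  ultimately show ?thesis by blast
qed

lemma c0_eq:
  fixes L :: ennreal
  assumes d: "0 < \<delta>" and ab: "0 < \<beta>" "0 < \<alpha>" and l: "0 < l1" and r: "\<rho> < 1"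
  shows "ennreal l1 * (ennreal (1/\<delta>) * (ennreal (1/(\<beta>*\<delta>)) * (ennreal (1/(\<alpha>*\<delta>)) * L))) * ennreal (exp (s+1)) * ennreal (1 / (1 - \<rho>))
    = ennreal (l1 * (1/\<delta>) * (1/(\<beta>*\<delta>)) * (1/(\<alpha>*\<delta>)) * exp (s+1) * (1 / (1 - \<rho>))) * L"
proof -
  have p: "0 \<le> 1/\<delta>" "0 \<le> 1/(\<beta>*\<delta>)" "0 \<le> 1/(\<alpha>*\<delta>)" "0 \<le> exp (s+1)" "0 \<le> 1 / (1 - \<rho>)"
    using d ab r by auto
  have e: "ennreal (l1 * (1/\<delta>) * (1/(\<beta>*\<delta>)) * (1/(\<alpha>*\<delta>)) * exp (s+1) * (1 / (1 - \<rho>))) =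
    ennreal l1 * ennreal (1/\<delta>) * ennreal (1/(\<beta>*\<delta>)) * ennreal (1/(\<alpha>*\<delta>)) * ennreal (exp (s+1)) * ennreal (1 / (1 - \<rho>))"
    by (simp only: ennreal_mult''[OF p(5)] ennreal_mult''[OF p(4)] ennreal_mult''[OF p(3)] ennreal_mult''[OF p(2)] ennreal_mult''[OF p(1)])
  show ?thesis unfolding e by (simp only: mult_ac)
qed

theorem proposition7p2:
  fixes \<alpha> \<beta> l0 l1 :: real
    and \<mu> :: "((real \<times> real) \<times> nat) measure"
    and rho0 :: "real \<times> real \<Rightarrow> real"
    and K :: "(real \<times> real) set"
  assumes "\<alpha> > \<beta>" "\<beta> > 0" "l0 > 0" "l1 > 0"
    and "pdmp_invariant \<alpha> \<beta> l0 l1 \<mu>"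
    and "is_density0 \<mu> rho0"
    and "compact K"
    and "K \<subseteq> Gamma_r \<alpha> \<beta> \<union> boundary_Gamma1 \<alpha> \<beta>"
  shows "\<exists>C. AE x in lborel. x \<in> K \<longrightarrow> rho0 x \<le> C"
proof -
  have ab: "0 < \<beta>" "\<beta> < \<alpha>" and l: "0 < l0" "0 < l1" using assms by auto
  note inv = assms(5)
  have rm[measurable]: "rho0 \<in> borel_measurable borel" and rnn: "\<And>x. 0 \<le> rho0 x"
    and dens: "\<And>A. A \<in> sets lborel \<Longrightarrow> emeasure \<mu> (A \<times> {0}) = (\<integral>\<^sup>+ x\<in>A. ennreal (rho0 x) \<partial>lborel)"
    using assms(6) by (auto simp: is_density0_def)
  obtain \<delta> where d: "0 < \<delta>" "\<delta> < 1" and KK: "K \<subseteq> {y. \<delta> \<le> snd y \<and> snd y + \<delta> \<le> fst y \<and> fst y \<le> 1}"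
    using delta_exists[OF ab assms(7,8)] by blast
  define s where "s = (1 - ln \<delta>) / \<alpha>"
  have a: "0 < \<alpha>" using ab by simp
  have "ln \<delta> < 0" using d by simp
  then have s0: "0 \<le> s" using a by (simp add: s_def)
  have es: "exp (- \<alpha> * s) < \<delta>"
  proof -
    have "- \<alpha> * s = ln \<delta> - 1" using a by (simp add: s_def)
    then have "exp (- \<alpha> * s) = exp (ln \<delta> - 1)" by simp
    also have "\<dots> = \<delta> / exp 1" using d by (simp add: exp_diff)
    also have "\<dots> < \<delta>"
    proof -
      have "\<delta> * 1 < \<delta> * exp 1" using d by (intro mult_strict_left_mono) auto
      then show ?thesis by (simp add: divide_less_eq)
    qed
    finally show ?thesis .
  qed
  define c0 where "c0 = l1 * (1/\<delta>) * (1/(\<beta>*\<delta>)) * (1/(\<alpha>*\<delta>)) * exp (s+1) * (1 / (1 - rho l0 l1))"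
  have rho1: "rho l0 l1 < 1" using rho_bounds[OF l] by simp
  have c0nn: "0 \<le> c0" using d ab l rho1 by (simp add: c0_def)
  have bound: "emeasure \<mu> (B \<times> {0}) \<le> ennreal c0 * emeasure lborel B"
    if Bm: "B \<in> sets borel" and BK: "B \<subseteq> K" for B
  proof -
    have BK': "B \<subseteq> {y. \<delta> \<le> snd y \<and> snd y + \<delta> \<le> fst y \<and> fst y \<le> 1}" using BK KK by blast
    have "emeasure \<mu> (B \<times> {0}) \<le> ennreal l1 * (ennreal (1/\<delta>) * (ennreal (1/(\<beta>*\<delta>)) * (ennreal (1/(\<alpha>*\<delta>)) * emeasure lborel B)))
      * ennreal (exp (s+1)) * ennreal (1 / (1 - rho l0 l1))"
      by (rule mu0_bound[OF ab d l inv Bm BK' s0 es])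
    also have "\<dots> = ennreal c0 * emeasure lborel B"
      unfolding c0_def by (rule c0_eq) (use d ab l rho1 in auto)
    finally show ?thesis .
  qed
  define C where "C = c0 + 1"
  define B where "B = K \<inter> {x. C < rho0 x}"
  have Kc: "closed K" using assms(7) by (rule compact_imp_closed)
  have Kb: "K \<in> sets borel" using Kc by (rule borel_closed)
  have Bm: "B \<in> sets borel" unfolding B_def using Kb by measurable
  have Bfin: "emeasure lborel B < \<infinity>"
  proof -
    have "emeasure lborel B \<le> emeasure lborel K" unfolding B_def using Kb by (intro emeasure_mono) auto
    also have "\<dots> < \<infinity>" using compact_imp_bounded[OF assms(7)] by (rule emeasure_bounded_finite)
    finally show ?thesis .
  qed
  have "ennreal C * emeasure lborel B = (\<integral>\<^sup>+ x\<in>B. ennreal C \<partial>lborel)"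
    using Bm by (simp add: nn_integral_cmult_indicator)
  also have "\<dots> \<le> (\<integral>\<^sup>+ x\<in>B. ennreal (rho0 x) \<partial>lborel)"
    by (intro nn_integral_mono) (auto simp: B_def indicator_def intro: ennreal_leI)
  also have "\<dots> = emeasure \<mu> (B \<times> {0})" using Bm by (simp add: dens)
  also have "\<dots> \<le> ennreal c0 * emeasure lborel B" using bound[OF Bm] by (simp add: B_def)
  finally have le: "ennreal C * emeasure lborel B \<le> ennreal c0 * emeasure lborel B" .
  have B0: "emeasure lborel B = 0"
  proof -
    obtain L where L: "emeasure lborel B = ennreal L" "0 \<le> L" using Bfin
      by (cases "emeasure lborel B") auto
    have "ennreal (C * L) \<le> ennreal (c0 * L)" using le L c0nn by (simp add: ennreal_mult C_def)
    then have "C * L \<le> c0 * L" using c0nn L by (simp add: ennreal_le_iff)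
    then have "L \<le> 0" by (simp add: C_def algebra_simps)
    then show ?thesis using L by simp
  qed
  have "AE x in lborel. x \<in> K \<longrightarrow> rho0 x \<le> C"
  proof (rule AE_I')
    show "B \<in> null_sets lborel" using Bm B0 by (simp add: null_sets_def)
    show "{x \<in> space lborel. \<not> (x \<in> K \<longrightarrow> rho0 x \<le> C)} \<subseteq> B" by (auto simp: B_def)
  qed
  then show ?thesis by blast
qed

end
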